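(* Let $X$ be a real-valued random process on $\mathbb{R}$ with stationary increments (with the relevant moments finite), let $\psi$ be a wavelet as described in the context, and suppose $X$ is time-reversible. Then for all $t,\tau\in\mathbb{R}$, all $j,a\in\mathbb{Z}$ and all $k,l\in\{1,2\}$, $$\mathbb{E}\{\rho_k(WX(t,j))\,\rho_l(WX(t-2^j\tau,j-a))^*\}=\mathbb{E}\{\rho_k(WX(t,j))^*\,\rho_l(WX(t+2^j\tau,j-a))\},$$ which the paper writes compactly as $\mathbb{E}\{\rho WX(t,j)\,\rho WX(t-2^j\tau,j-a)^*\}=\mathbb{E}\{\rho WX(t,j)^*\,\rho WX(t+2^j\tau,j-a)\}$ (a Hermitian symmetry in $\tau$ of the joint phase-modulus correlation matrix).
   Context: A wavelet $\psi:\mathbb{R}\to\mathbb{C}$ has fast decay away from $t=0$, zero average, $\int|\psi|^2=1$, and a real-valued Fourier transform $\widehat\psi$. For $j\in\mathbb{Z}$, $\psi_j(t)=2^{-j}\psi(2^{-j}t)$, and $WX(t,j)=X\star\psi_j(t)$ (these coefficients are stationary in $t$ when $X$ has stationary increments). For $z\in\mathbb{C}$, $\rho(z)=(\rho_1(z),\rho_2(z))=(z,|z|)$; $^*$ denotes complex conjugation. $X$ is time-reversible if the process $RX(t)=X(-t)$ has the same probability distribution as $X$. *)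

theory Defs
  imports "HOL-Probability.Probability"
begin

definition is_wavelet :: "(real \<Rightarrow> complex) \<Rightarrow> bool" where
  "is_wavelet psi \<longleftrightarrow>
     psi \<in> borel_measurable lborel \<and>
     (\<forall>n::nat. \<exists>C::real. \<forall>t. cmod (psi t) * (1 + \<bar>t\<bar>) ^ n \<le> C) \<and>
     integrable lborel psi \<and> (\<integral>t. psi t \<partial>lborel) = 0 \<and>
     (\<integral>t. (cmod (psi t))\<^sup>2 \<partial>lborel) = 1 \<and>
     (\<forall>w::real. Im (\<integral>t. psi t * cis (- w * t) \<partial>lborel) = 0)"

definition psi_j :: "(real \<Rightarrow> complex) \<Rightarrow> int \<Rightarrow> real \<Rightarrow> complex" where
  "psi_j psi j t = complex_of_real (2 powr (- real_of_int j)) * psi (2 powr (- real_of_int j) * t)"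

definition WX :: "('a \<Rightarrow> real \<Rightarrow> real) \<Rightarrow> (real \<Rightarrow> complex) \<Rightarrow> 'a \<Rightarrow> real \<Rightarrow> int \<Rightarrow> complex" where
  "WX X psi w t j = (\<integral>u. complex_of_real (X w u) * psi_j psi j (t - u) \<partial>lborel)"

definition rho :: "nat \<Rightarrow> complex \<Rightarrow> complex" where
  "rho k z = (if k = 1 then z else complex_of_real (cmod z))"

definition process_law :: "'a measure \<Rightarrow> ('a \<Rightarrow> real \<Rightarrow> real) \<Rightarrow> (real \<Rightarrow> real) measure" where
  "process_law M X = distr M (Pi\<^sub>M UNIV (\<lambda>_. borel)) X"

definition stationary_increments :: "'a measure \<Rightarrow> ('a \<Rightarrow> real \<Rightarrow> real) \<Rightarrow> bool" where
  "stationary_increments M X \<longleftrightarrow>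
     (\<forall>h. process_law M (\<lambda>w t. X w (t + h) - X w h) = process_law M (\<lambda>w t. X w t - X w 0))"

definition time_reversible :: "'a measure \<Rightarrow> ('a \<Rightarrow> real \<Rightarrow> real) \<Rightarrow> bool" where
  "time_reversible M X \<longleftrightarrow> process_law M (\<lambda>w t. X w (- t)) = process_law M X"

end

theory Submission
  imports Defs
begin

lemma intc_iexp:
  fixes g :: "real \<Rightarrow> real"
  assumes "integrable lborel g"
  shows "integrable lborel (\<lambda>t. complex_of_real (g t) * iexp (w * t))"
proof (rule Bochner_Integration.integrable_bound[OF assms])
  have [measurable]: "g \<in> borel_measurable borel" using assms by auto
  show "(\<lambda>t. complex_of_real (g t) * iexp (w * t)) \<in> borel_measurable lborel" by measurable
  show "AE x in lborel. norm (complex_of_real (g x) * iexp (w * x)) \<le> norm (g x)"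
    by (simp add: norm_mult)
qed

lemma fourier_zero_real:
  fixes f :: "real \<Rightarrow> real"
  assumes f: "integrable lborel f"
    and z: "\<And>w. (\<integral>t. complex_of_real (f t) * iexp (w * t) \<partial>lborel) = 0"
  shows "AE t in lborel. f t = 0"
proof -
  define fp where "fp t = max (f t) 0" for t
  define fn where "fn t = max (- f t) 0" for t
  have [measurable]: "f \<in> borel_measurable borel" using f by auto
  have ip: "integrable lborel fp" unfolding fp_def using f by (intro integrable_max) auto
  have iN: "integrable lborel fn" unfolding fn_def using f by (intro integrable_max) auto
  have fpn: "f t = fp t - fn t" for t unfolding fp_def fn_def by auto
  have pos: "fp t \<ge> 0" "fn t \<ge> 0" for t unfolding fp_def fn_def by auto
  have prod0: "fp t * fn t = 0" for t unfolding fp_def fn_def by auto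
  have [measurable]: "fp \<in> borel_measurable borel" "fn \<in> borel_measurable borel"
    using ip iN by auto
  have eqw: "(\<integral>t. complex_of_real (fp t) * iexp (w * t) \<partial>lborel) = (\<integral>t. complex_of_real (fn t) * iexp (w * t) \<partial>lborel)" for w
  proof -
    have "(\<integral>t. complex_of_real (f t) * iexp (w * t) \<partial>lborel) = 
      (\<integral>t. complex_of_real (fp t) * iexp (w * t) - complex_of_real (fn t) * iexp (w * t) \<partial>lborel)"
      by (simp add: fpn algebra_simps)
    also have "\<dots> = (\<integral>t. complex_of_real (fp t) * iexp (w * t) \<partial>lborel) - (\<integral>t. complex_of_real (fn t) * iexp (w * t) \<partial>lborel)"
      by (rule Bochner_Integration.integral_diff[OF intc_iexp[OF ip] intc_iexp[OF iN]])
    finally show ?thesis using z[of w] by simp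
  qed
  define c where "c = (\<integral>t. fp t \<partial>lborel)"
  have c2: "c = (\<integral>t. fn t \<partial>lborel)"
  proof -
    have "complex_of_real c = complex_of_real (\<integral>t. fn t \<partial>lborel)"
      using eqw[of 0] by (simp add: c_def)
    then show ?thesis by simp
  qed
  have c0: "c \<ge> 0" unfolding c_def using pos by simp
  show ?thesis
  proof (cases "c = 0")
    case True
    have "AE t in lborel. fp t = 0"
      using True ip pos unfolding c_def by (subst (asm) integral_nonneg_eq_0_iff_AE) auto
    moreover have "AE t in lborel. fn t = 0"
      using True iN pos unfolding c2 by (subst (asm) integral_nonneg_eq_0_iff_AE) auto
    ultimately show ?thesis by eventually_elim (simp add: fpn)
  next
    case False
    then have cp: "c > 0" using c0 by simp
    define M1 where "M1 = density lborel (\<lambda>t. ennreal (fp t / c))"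
    define M2 where "M2 = density lborel (\<lambda>t. ennreal (fn t / c))"
    have rd: "real_distribution (density lborel (\<lambda>t. ennreal (g t / c)))"
      if g: "integrable lborel g" "\<And>t. g t \<ge> 0" "(\<integral>t. g t \<partial>lborel) = c" for g
    proof -
      have [measurable]: "g \<in> borel_measurable borel" using g by auto
      have "emeasure (density lborel (\<lambda>t. ennreal (g t / c))) UNIV = (\<integral>\<^sup>+t. ennreal (g t / c) \<partial>lborel)"
        by (simp add: emeasure_density)
      also have "\<dots> = ennreal (\<integral>t. g t / c \<partial>lborel)"
        by (rule nn_integral_eq_integral) (use g cp in auto)
      also have "\<dots> = 1" using g cp by simp
      finally have "prob_space (density lborel (\<lambda>t. ennreal (g t / c)))"
        by (intro prob_spaceI) simp
      then show ?thesis unfolding real_distribution_def real_distribution_axioms_def by simp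
    qed
    have rd1: "real_distribution M1" unfolding M1_def by (rule rd[OF ip pos(1) c_def[symmetric]])
    have rd2: "real_distribution M2" unfolding M2_def by (rule rd[OF iN pos(2) c2[symmetric]])
    have chr: "char (density lborel (\<lambda>t. ennreal (g t / c))) w = (\<integral>t. complex_of_real (g t) * iexp (w * t) \<partial>lborel) / c"
      if g: "integrable lborel g" "\<And>t. g t \<ge> 0" for g w
    proof -
      have [measurable]: "g \<in> borel_measurable borel" using g by auto
      have "char (density lborel (\<lambda>t. ennreal (g t / c))) w = (\<integral>t. (g t / c) *\<^sub>R iexp (w * t) \<partial>lborel)"
        unfolding char_def using g cp by (subst integral_density) auto
      also have "\<dots> = (\<integral>t. (complex_of_real (g t) * iexp (w * t)) / c \<partial>lborel)"
        by (intro Bochner_Integration.integral_cong) (auto simp: scaleR_conv_of_real)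
      also have "\<dots> = (\<integral>t. complex_of_real (g t) * iexp (w * t) \<partial>lborel) / c"
        by (rule integral_divide_zero)
      finally show ?thesis .
    qed
    have "char M1 = char M2"
      unfolding M1_def M2_def using chr[OF ip pos(1)] chr[OF iN pos(2)] eqw by auto
    then have "M1 = M2" by (rule Levy_uniqueness[OF rd1 rd2])
    then have "AE t in lborel. ennreal (fp t / c) = ennreal (fn t / c)"
      unfolding M1_def M2_def by (subst (asm) sigma_finite_measure.density_unique_iff[OF lborel.sigma_finite_measure_axioms]) auto
    then show ?thesis
    proof eventually_elim
      case (elim t)
      then have "fp t / c = fn t / c" using pos[of t] cp by (simp add: ennreal_inj)
      then have "fp t = fn t" using cp by simp
      then show ?case using prod0[of t] by (simp add: fpn)
    qed
  qed
qed

lemma cnj_iexp: "cnj (iexp x) = iexp (- x)"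
  by (subst exp_cnj) simp

lemma borel_measurable_cnj[measurable (raw)]:
  assumes "f \<in> borel_measurable M" shows "(\<lambda>x. cnj (f x)) \<in> borel_measurable M"
  by (rule borel_measurable_continuous_on[OF continuous_on_cnj[OF continuous_on_id] assms])

lemma re_helper: "complex_of_real (Re z) * e = (z * e + cnj z * e) / 2"
proof -
  have "z * e + cnj z * e = (z + cnj z) * e" by (simp add: distrib_right)
  also have "\<dots> = complex_of_real (2 * Re z) * e" by (simp add: complex_add_cnj)
  finally show ?thesis by simp
qed

lemma im_helper: "complex_of_real (Im z) * e = (z * e - cnj z * e) / (2 * \<i>)"
proof -
  have "z * e - cnj z * e = (z - cnj z) * e" by (simp add: left_diff_distrib)
  also have "\<dots> = complex_of_real (2 * Im z) * \<i> * e" by (simp add: complex_diff_cnj)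
  finally have "z * e - cnj z * e = (2 * \<i>) * (complex_of_real (Im z) * e)" by (simp add: algebra_simps)
  then show ?thesis by simp
qed

lemma fourier_zero_complex:
  fixes g :: "real \<Rightarrow> complex"
  assumes g: "integrable lborel g"
    and z: "\<And>w. (\<integral>t. g t * iexp (w * t) \<partial>lborel) = 0"
  shows "AE t in lborel. g t = 0"
proof -
  have [measurable]: "g \<in> borel_measurable borel" using g by auto
  have ig: "integrable lborel (\<lambda>t. g t * iexp (w * t))" for w
    by (rule Bochner_Integration.integrable_bound[OF g]) (auto simp: norm_mult)
  have icg: "integrable lborel (\<lambda>t. cnj (g t) * iexp (w * t))" for w
    by (rule Bochner_Integration.integrable_bound[OF g]) (auto simp: norm_mult)
  have zc: "(\<integral>t. cnj (g t) * iexp (w * t) \<partial>lborel) = 0" for w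
  proof -
    have "(\<integral>t. cnj (g t) * iexp (w * t) \<partial>lborel) = (\<integral>t. cnj (g t * iexp ((-w) * t)) \<partial>lborel)"
      by (intro Bochner_Integration.integral_cong) (auto simp: exp_cnj)
    also have "\<dots> = 0" by (subst Bochner_Integration.integral_cnj) (use z[of "-w"] in simp)
    finally show ?thesis .
  qed
  have ire: "integrable lborel (\<lambda>t. Re (g t))" using g by (rule integrable_Re)
  have iim: "integrable lborel (\<lambda>t. Im (g t))" using g by (rule integrable_Im)
  have "AE t in lborel. Re (g t) = 0"
  proof (rule fourier_zero_real[OF ire])
    fix w
    have "(\<integral>t. complex_of_real (Re (g t)) * iexp (w * t) \<partial>lborel)
        = (\<integral>t. (g t * iexp (w * t) + cnj (g t) * iexp (w * t)) / 2 \<partial>lborel)"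
      by (intro Bochner_Integration.integral_cong) (simp_all only: re_helper)
    also have "\<dots> = ((\<integral>t. g t * iexp (w * t) \<partial>lborel) + (\<integral>t. cnj (g t) * iexp (w * t) \<partial>lborel)) / 2"
      by (simp only: integral_divide_zero Bochner_Integration.integral_add[OF ig icg])
    also have "\<dots> = 0" using z zc by simp
    finally show "(\<integral>t. complex_of_real (Re (g t)) * iexp (w * t) \<partial>lborel) = 0" .
  qed
  moreover have "AE t in lborel. Im (g t) = 0"
  proof (rule fourier_zero_real[OF iim])
    fix w
    have "(\<integral>t. complex_of_real (Im (g t)) * iexp (w * t) \<partial>lborel)
        = (\<integral>t. (g t * iexp (w * t) - cnj (g t) * iexp (w * t)) / (2 * \<i>) \<partial>lborel)"
      by (intro Bochner_Integration.integral_cong) (simp_all only: im_helper)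
    also have "\<dots> = ((\<integral>t. g t * iexp (w * t) \<partial>lborel) - (\<integral>t. cnj (g t) * iexp (w * t) \<partial>lborel)) / (2 * \<i>)"
      by (simp only: integral_divide_zero Bochner_Integration.integral_diff[OF ig icg])
    also have "\<dots> = 0" using z zc by simp
    finally show "(\<integral>t. complex_of_real (Im (g t)) * iexp (w * t) \<partial>lborel) = 0" .
  qed
  ultimately show ?thesis by eventually_elim (simp add: complex_eq_iff)
qed

lemma wavelet_sym:
  assumes "is_wavelet psi"
  shows "AE s in lborel. psi (- s) = cnj (psi s)"
proof -
  have ip: "integrable lborel psi" and [measurable]: "psi \<in> borel_measurable borel"
    and re: "\<And>w. Im (\<integral>t. psi t * cis (- w * t) \<partial>lborel) = 0"
    using assms unfolding is_wavelet_def by auto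
  have ipm: "integrable lborel (\<lambda>s. psi (- s))"
    using lborel_integrable_real_affine[OF ip, of "-1" 0] by simp
  have icp: "integrable lborel (\<lambda>s. cnj (psi s))" using ip by (rule integrable_cnj)
  have "AE s in lborel. psi (- s) - cnj (psi s) = 0"
  proof (rule fourier_zero_complex)
    show "integrable lborel (\<lambda>s. psi (- s) - cnj (psi s))" using ipm icp by auto
    fix w
    have i1: "integrable lborel (\<lambda>t. psi (- t) * iexp (w * t))"
      by (rule Bochner_Integration.integrable_bound[OF ipm]) (auto simp: norm_mult)
    have i2: "integrable lborel (\<lambda>t. cnj (psi t) * iexp (w * t))"
      by (rule Bochner_Integration.integrable_bound[OF icp]) (auto simp: norm_mult)
    define F where "F = (\<integral>t. psi t * cis (- w * t) \<partial>lborel)"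
    have e1: "(\<integral>t. psi (- t) * iexp (w * t) \<partial>lborel) = F"
    proof -
      have "F = (\<integral>t. psi t * iexp (- w * t) \<partial>lborel)" unfolding F_def by (simp add: cis_conv_exp)
      also have "\<dots> = \<bar>-1\<bar> *\<^sub>R (\<integral>t. psi (0 + -1 * t) * iexp (- w * (0 + -1 * t)) \<partial>lborel)"
        by (rule lborel_integral_real_affine) simp
      also have "\<dots> = (\<integral>t. psi (- t) * iexp (w * t) \<partial>lborel)" by simp
      finally show ?thesis by simp
    qed
    have e2: "(\<integral>t. cnj (psi t) * iexp (w * t) \<partial>lborel) = cnj F"
    proof -
      have "(\<integral>t. cnj (psi t) * iexp (w * t) \<partial>lborel) = (\<integral>t. cnj (psi t * iexp (- w * t)) \<partial>lborel)"
        by (intro Bochner_Integration.integral_cong) (auto simp: exp_cnj)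
      also have "\<dots> = cnj F" unfolding F_def by (subst Bochner_Integration.integral_cnj) (simp add: cis_conv_exp)
      finally show ?thesis .
    qed
    have "(\<integral>t. (psi (- t) - cnj (psi t)) * iexp (w * t) \<partial>lborel)
       = (\<integral>t. psi (- t) * iexp (w * t) - cnj (psi t) * iexp (w * t) \<partial>lborel)"
      by (simp add: algebra_simps)
    also have "\<dots> = F - cnj F" using e1 e2 Bochner_Integration.integral_diff[OF i1 i2] by simp
    also have "\<dots> = 0" using re[of w] unfolding F_def[symmetric] by (simp add: complex_eq_iff)
    finally show "(\<integral>t. (psi (- t) - cnj (psi t)) * iexp (w * t) \<partial>lborel) = 0" .
  qed
  then show ?thesis by simp
qed

lemma proc_meas_Pi:
  assumes [measurable]: "(\<lambda>(w,t). X w t) \<in> borel_measurable (M \<Otimes>\<^sub>M lborel)"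
  shows "X \<in> M \<rightarrow>\<^sub>M Pi\<^sub>M UNIV (\<lambda>_. borel)"
proof -
  have "(\<lambda>w. X w t) \<in> borel_measurable M" for t
    using measurable_Pair1[OF assms, of t] by simp
  then have "(\<lambda>w t. X w t) \<in> M \<rightarrow>\<^sub>M Pi\<^sub>M UNIV (\<lambda>_. borel)"
    by (intro measurable_PiM_single') auto
  then show ?thesis by simp
qed

lemma proc_meas_t:
  assumes [measurable]: "(\<lambda>(w,t). X w t) \<in> borel_measurable (M \<Otimes>\<^sub>M lborel)"
  shows "(\<lambda>w. X w t) \<in> borel_measurable M"
  using measurable_Pair1[OF assms, of t] by simp

lemma law_comp:
  assumes Xm: "(\<lambda>(w,t). X w t) \<in> borel_measurable (M \<Otimes>\<^sub>M lborel)"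
    and T[measurable]: "T \<in> borel_measurable borel"
  shows "process_law M (\<lambda>w t. T (X w t)) = distr (process_law M X) (Pi\<^sub>M UNIV (\<lambda>_. borel)) (\<lambda>y t. T (y t))"
proof -
  have Tm: "(\<lambda>y t. T (y t)) \<in> Pi\<^sub>M UNIV (\<lambda>_. borel) \<rightarrow>\<^sub>M Pi\<^sub>M UNIV (\<lambda>_::real. borel)"
    using measurable_PiM_single'[of UNIV "\<lambda>t y. T (y t)" "Pi\<^sub>M UNIV (\<lambda>_::real. borel)" "\<lambda>_. borel"]
    by simp
  show ?thesis
    unfolding process_law_def by (subst distr_distr[OF Tm proc_meas_Pi[OF Xm]]) (simp add: comp_def)
qed

lemma law_map:
  assumes Xm: "(\<lambda>(w,t). X w t) \<in> borel_measurable (M \<Otimes>\<^sub>M lborel)"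
    and X'm: "(\<lambda>(w,t). X' w t) \<in> borel_measurable (M \<Otimes>\<^sub>M lborel)"
    and law: "process_law M X = process_law M X'"
    and T[measurable]: "T \<in> borel_measurable borel"
  shows "process_law M (\<lambda>w t. T (X w t)) = process_law M (\<lambda>w t. T (X' w t))"
  unfolding law_comp[OF Xm T] law_comp[OF X'm T] law ..

lemma law_integral1:
  assumes Xm: "(\<lambda>(w,t). X w t) \<in> borel_measurable (M \<Otimes>\<^sub>M lborel)"
    and F: "F \<in> borel_measurable (Pi\<^sub>M UNIV (\<lambda>_. borel))"
  shows "(\<integral>w. F (X w) \<partial>M) = (\<integral>y. (F y :: 'b::{banach,second_countable_topology}) \<partial>process_law M X)"
  unfolding process_law_def by (rule integral_distr[symmetric, OF proc_meas_Pi[OF Xm] F])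

lemma law_integral:
  assumes Xm: "(\<lambda>(w,t). X w t) \<in> borel_measurable (M \<Otimes>\<^sub>M lborel)"
    and X'm: "(\<lambda>(w,t). X' w t) \<in> borel_measurable (M \<Otimes>\<^sub>M lborel)"
    and law: "process_law M X = process_law M X'"
    and F: "F \<in> borel_measurable (Pi\<^sub>M UNIV (\<lambda>_. borel))"
  shows "(\<integral>w. F (X w) \<partial>M) = (\<integral>w. (F (X' w) :: 'b::{banach,second_countable_topology}) \<partial>M)"
  unfolding law_integral1[OF Xm F] law_integral1[OF X'm F] law ..

definition trunc :: "real \<Rightarrow> real \<Rightarrow> real" where "trunc c x = max (- c) (min c x)"

lemma trunc_meas[measurable]: "trunc c \<in> borel_measurable borel"
  unfolding trunc_def by measurable

lemma abs_integral_bounded: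
  fixes h :: "real \<Rightarrow> real"
  assumes "integrable lborel h" "\<And>u. \<bar>Y u\<bar> \<le> c" "Y \<in> borel_measurable borel"
  shows "\<bar>\<integral>u. Y u * h u \<partial>lborel\<bar> \<le> c * (\<integral>u. \<bar>h u\<bar> \<partial>lborel)"
proof -
  have c0: "c \<ge> 0" using assms(2)[of 0] by simp
  have i1: "integrable lborel (\<lambda>u. Y u * h u)"
    by (rule Bochner_Integration.integrable_bound[of _ "\<lambda>u. c * h u"]) (use assms c0 in \<open>auto simp: abs_mult intro!: mult_right_mono\<close>)
  have "\<bar>\<integral>u. Y u * h u \<partial>lborel\<bar> \<le> (\<integral>u. \<bar>Y u * h u\<bar> \<partial>lborel)"
    by (rule integral_abs_bound)
  also have "\<dots> \<le> (\<integral>u. c * \<bar>h u\<bar> \<partial>lborel)"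
  proof (rule integral_mono)
    show "integrable lborel (\<lambda>u. \<bar>Y u * h u\<bar>)" using i1 by (rule integrable_abs)
    show "integrable lborel (\<lambda>u. c * \<bar>h u\<bar>)" using assms(1) by (intro integrable_mult_right integrable_abs)
    show "\<bar>Y u * h u\<bar> \<le> c * \<bar>h u\<bar>" for u using assms(2)[of u] by (simp add: abs_mult mult_right_mono)
  qed
  finally show ?thesis by simp
qed

lemma abs_integral_bounded':
  fixes h :: "real \<Rightarrow> real"
  assumes "integrable lborel h" "\<And>u. \<bar>Y u\<bar> \<le> c"
  shows "\<bar>\<integral>u. Y u * h u \<partial>lborel\<bar> \<le> c * (\<integral>u. \<bar>h u\<bar> \<partial>lborel)"
proof (cases "integrable lborel (\<lambda>u. Y u * h u)")
  case True
  have c0: "c \<ge> 0" using assms(2)[of 0] by simp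
  have "\<bar>\<integral>u. Y u * h u \<partial>lborel\<bar> \<le> (\<integral>u. \<bar>Y u * h u\<bar> \<partial>lborel)"
    by (rule integral_abs_bound)
  also have "\<dots> \<le> (\<integral>u. c * \<bar>h u\<bar> \<partial>lborel)"
  proof (rule integral_mono)
    show "integrable lborel (\<lambda>u. \<bar>Y u * h u\<bar>)" using True by (rule integrable_abs)
    show "integrable lborel (\<lambda>u. c * \<bar>h u\<bar>)" using assms(1) by (intro integrable_mult_right integrable_abs)
    show "\<bar>Y u * h u\<bar> \<le> c * \<bar>h u\<bar>" for u using assms(2)[of u] by (simp add: abs_mult mult_right_mono)
  qed
  finally show ?thesis by simp
next
  case False
  have c0: "c \<ge> 0" using assms(2)[of 0] by simp
  then show ?thesis using False by (simp add: not_integrable_integral_eq)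
qed

lemma jm_snd:
  assumes "h \<in> borel_measurable borel"
  shows "(\<lambda>x. h (snd x)) \<in> borel_measurable (M \<Otimes>\<^sub>M lborel)"
  by (rule measurable_compose[OF measurable_snd]) (use assms in simp)

lemma jm_fst:
  assumes "f \<in> borel_measurable M"
  shows "(\<lambda>x. f (fst x)) \<in> borel_measurable (M \<Otimes>\<^sub>M N)"
  by (rule measurable_compose[OF measurable_fst]) (use assms in simp)

lemma jm_mult:
  fixes h :: "real \<Rightarrow> real"
  assumes Xm: "(\<lambda>(w,t). X w t) \<in> borel_measurable (M \<Otimes>\<^sub>M lborel)"
    and h: "h \<in> borel_measurable borel"
  shows "(\<lambda>(w,u). X w u * h u) \<in> borel_measurable (M \<Otimes>\<^sub>M lborel)"
proof -
  have "(\<lambda>x. (\<lambda>(w,t). X w t) x * h (snd x)) \<in> borel_measurable (M \<Otimes>\<^sub>M lborel)"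
    by (rule borel_measurable_times[OF Xm jm_snd[OF h]])
  then show ?thesis by (simp add: case_prod_beta)
qed

lemma G_meas:
  fixes h :: "real \<Rightarrow> real"
  assumes Xm: "(\<lambda>(w,t). X w t) \<in> borel_measurable (M \<Otimes>\<^sub>M lborel)"
    and h: "h \<in> borel_measurable borel"
  shows "(\<lambda>w. \<integral>u. X w u * h u \<partial>lborel) \<in> borel_measurable M"
  by (rule lborel.borel_measurable_lebesgue_integral) (use jm_mult[OF Xm h] in simp)

lemma P_meas:
  fixes hs :: "(real \<Rightarrow> real) list"
  assumes Xm: "(\<lambda>(w,t). X w t) \<in> borel_measurable (M \<Otimes>\<^sub>M lborel)"
    and hs: "\<forall>h\<in>set hs. integrable lborel h"
  shows "(\<lambda>w. \<Prod>h\<leftarrow>hs. \<integral>u. X w u * h u \<partial>lborel) \<in> borel_measurable M"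
  using hs
proof (induction hs)
  case Nil then show ?case by simp
next
  case (Cons h hs)
  have "h \<in> borel_measurable borel" using Cons.prems by auto
  from borel_measurable_times[OF G_meas[OF Xm this] Cons.IH] Cons.prems show ?case by simp
qed

lemma P_bound:
  fixes hs :: "(real \<Rightarrow> real) list"
  assumes hs: "\<forall>h\<in>set hs. integrable lborel h" and bY: "\<And>w t. \<bar>Y w t\<bar> \<le> c"
  shows "\<exists>K. \<forall>w. \<bar>\<Prod>h\<leftarrow>hs. \<integral>u. Y w u * h u \<partial>lborel\<bar> \<le> K"
  using hs
proof (induction hs)
  case Nil then show ?case by (intro exI[of _ 1]) simp
next
  case (Cons h hs)
  then obtain K where K: "\<And>w. \<bar>\<Prod>h\<leftarrow>hs. \<integral>u. Y w u * h u \<partial>lborel\<bar> \<le> K" by auto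
  have hi: "integrable lborel h" using Cons.prems by auto
  have "\<bar>\<Prod>h\<leftarrow>h#hs. \<integral>u. Y w u * h u \<partial>lborel\<bar> \<le> (c * (\<integral>u. \<bar>h u\<bar> \<partial>lborel)) * K" for w
    using abs_integral_bounded'[OF hi, of "Y w" c] bY K[of w]
    by (simp add: abs_mult mult_mono')
  then show ?case by blast
qed

lemma int_snd:
  fixes h :: "real \<Rightarrow> real"
  assumes M: "prob_space M" and h: "integrable lborel h"
  shows "integrable (M \<Otimes>\<^sub>M lborel) (\<lambda>x. h (snd x))"
proof -
  interpret prob_space M by (rule M)
  have hm[measurable]: "h \<in> borel_measurable borel" using h by auto
  have m: "(\<lambda>x. h (snd x)) \<in> borel_measurable (M \<Otimes>\<^sub>M lborel)" by (rule jm_snd[OF hm])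
  have "(\<integral>\<^sup>+x. ennreal (norm (h (snd x))) \<partial>(M \<Otimes>\<^sub>M lborel)) = (\<integral>\<^sup>+w. \<integral>\<^sup>+u. ennreal (norm (h u)) \<partial>lborel \<partial>M)"
    by (subst lborel.nn_integral_fst[symmetric]) (use m in auto)
  also have "\<dots> = (\<integral>\<^sup>+u. ennreal (norm (h u)) \<partial>lborel)" by (simp add: emeasure_space_1)
  also have "\<dots> < \<infinity>" using h by (simp add: integrable_iff_bounded)
  finally show ?thesis using m by (simp add: integrable_iff_bounded)
qed


lemma trunc_id: "\<bar>x\<bar> \<le> c \<Longrightarrow> trunc c x = x"
  unfolding trunc_def by auto

lemma trunc_bound: "c \<ge> 0 \<Longrightarrow> \<bar>trunc c x\<bar> \<le> c"
  unfolding trunc_def by auto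

lemma moment_step:
  fixes Y :: "'a \<Rightarrow> real \<Rightarrow> real" and F :: "(real \<Rightarrow> real) \<Rightarrow> real"
  assumes M: "prob_space M"
    and Ym: "(\<lambda>(w,t). Y w t) \<in> borel_measurable (M \<Otimes>\<^sub>M lborel)"
    and bY: "\<And>w t. \<bar>Y w t\<bar> \<le> c"
    and F: "F \<in> borel_measurable (Pi\<^sub>M UNIV (\<lambda>_. borel))" and bF: "\<And>y. \<bar>F y\<bar> \<le> B"
    and h: "integrable lborel h" and hs: "\<forall>h\<in>set hs. integrable lborel h"
  shows "(\<integral>w. F (Y w) * ((\<integral>u. Y w u * h u \<partial>lborel) * (\<Prod>h\<leftarrow>hs. \<integral>u. Y w u * h u \<partial>lborel)) \<partial>M)
    = (\<integral>u. (\<integral>w. F (Y w) * trunc c (Y w u) * (\<Prod>h\<leftarrow>hs. \<integral>u. Y w u * h u \<partial>lborel) \<partial>M) * h u \<partial>lborel)"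
proof -
  interpret prob_space M by (rule M)
  interpret pair_sigma_finite M lborel
    by (intro pair_sigma_finite.intro sigma_finite_measure_axioms lborel.sigma_finite_measure_axioms)
  define P where "P w = (\<Prod>h\<leftarrow>hs. \<integral>u. Y w u * h u \<partial>lborel)" for w
  have Pm: "P \<in> borel_measurable M" unfolding P_def by (rule P_meas[OF Ym hs])
  have "\<exists>K. \<forall>w. \<bar>P w\<bar> \<le> K" unfolding P_def by (rule P_bound[OF hs]) (rule bY)
  then obtain K where K: "\<And>w. \<bar>P w\<bar> \<le> K" by blast
  have FYm: "(\<lambda>w. F (Y w)) \<in> borel_measurable M" by (rule measurable_comp[OF proc_meas_Pi[OF Ym] F, unfolded comp_def])
  have hm: "h \<in> borel_measurable borel" using h by auto
  define H where "H w u = F (Y w) * P w * Y w u * h u" for w u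
  have Hm: "(\<lambda>x. H (fst x) (snd x)) \<in> borel_measurable (M \<Otimes>\<^sub>M lborel)"
  proof -
    have "(\<lambda>x. (F (Y (fst x)) * P (fst x)) * ((\<lambda>(w,u). Y w u * h u) x)) \<in> borel_measurable (M \<Otimes>\<^sub>M lborel)"
      by (intro borel_measurable_times jm_fst FYm Pm jm_mult[OF Ym hm])
    then show ?thesis unfolding H_def by (simp add: case_prod_beta mult.assoc)
  qed
  have Hi: "integrable (M \<Otimes>\<^sub>M lborel) (case_prod H)"
  proof (rule Bochner_Integration.integrable_bound[of _ "\<lambda>x. (B * K * c) * \<bar>h (snd x)\<bar>"])
    show "integrable (M \<Otimes>\<^sub>M lborel) (\<lambda>x. (B * K * c) * \<bar>h (snd x)\<bar>)"
      by (intro integrable_mult_right integrable_abs int_snd[OF M h])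
    show "case_prod H \<in> borel_measurable (M \<Otimes>\<^sub>M lborel)" using Hm by (simp add: case_prod_beta')
    show "AE x in M \<Otimes>\<^sub>M lborel. norm (case_prod H x) \<le> norm ((B * K * c) * \<bar>h (snd x)\<bar>)"
    proof (rule AE_I2)
      fix x :: "'a \<times> real"
      obtain w u where x: "x = (w,u)" by (cases x)
      have B0: "B \<ge> 0" using bF[of "\<lambda>_. 0"] by linarith
      have K0: "K \<ge> 0" using K[of w] by linarith
      have c0: "c \<ge> 0" using bY[of w u] by linarith
      have "\<bar>H w u\<bar> = \<bar>F (Y w)\<bar> * \<bar>P w\<bar> * \<bar>Y w u\<bar> * \<bar>h u\<bar>" unfolding H_def by (simp add: abs_mult)
      also have "\<dots> \<le> B * K * c * \<bar>h u\<bar>"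
        by (intro mult_mono bF K bY mult_nonneg_nonneg B0 K0 c0) auto
      finally have "\<bar>H w u\<bar> \<le> B * K * c * \<bar>h u\<bar>" .
      moreover have "B * K * c \<ge> 0" using bF[of "\<lambda>_. 0"] K[of w] bY[of w u] by auto
      ultimately show "norm (case_prod H x) \<le> norm ((B * K * c) * \<bar>h (snd x)\<bar>)" using x by simp
    qed
  qed
  have "(\<integral>w. F (Y w) * ((\<integral>u. Y w u * h u \<partial>lborel) * P w) \<partial>M) = (\<integral>w. \<integral>u. H w u \<partial>lborel \<partial>M)"
  proof (intro Bochner_Integration.integral_cong refl)
    fix w
    have "(\<integral>u. H w u \<partial>lborel) = (\<integral>u. (F (Y w) * P w) * (Y w u * h u) \<partial>lborel)"
      unfolding H_def by (simp add: mult.assoc)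
    also have "\<dots> = (F (Y w) * P w) * (\<integral>u. Y w u * h u \<partial>lborel)" by (rule integral_mult_right_zero)
    finally show "F (Y w) * ((\<integral>u. Y w u * h u \<partial>lborel) * P w) = (\<integral>u. H w u \<partial>lborel)" by simp
  qed
  also have "\<dots> = (\<integral>u. \<integral>w. H w u \<partial>M \<partial>lborel)"
    by (rule Fubini_integral[symmetric, OF Hi])
  also have "\<dots> = (\<integral>u. (\<integral>w. F (Y w) * trunc c (Y w u) * P w \<partial>M) * h u \<partial>lborel)"
  proof (intro Bochner_Integration.integral_cong refl)
    fix u
    have "(\<integral>w. H w u \<partial>M) = (\<integral>w. (F (Y w) * trunc c (Y w u) * P w) * h u \<partial>M)"
      unfolding H_def by (intro Bochner_Integration.integral_cong refl) (simp add: trunc_id[OF bY] algebra_simps)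
    also have "\<dots> = (\<integral>w. F (Y w) * trunc c (Y w u) * P w \<partial>M) * h u" by (rule integral_mult_left_zero)
    finally show "(\<integral>w. H w u \<partial>M) = (\<integral>w. F (Y w) * trunc c (Y w u) * P w \<partial>M) * h u" .
  qed
  finally show ?thesis unfolding P_def .
qed

lemma moments_eq:
  fixes X X' :: "'a \<Rightarrow> real \<Rightarrow> real"
  assumes M: "prob_space M"
    and Xm: "(\<lambda>(w,t). X w t) \<in> borel_measurable (M \<Otimes>\<^sub>M lborel)"
    and X'm: "(\<lambda>(w,t). X' w t) \<in> borel_measurable (M \<Otimes>\<^sub>M lborel)"
    and law: "process_law M X = process_law M X'"
    and bX: "\<And>w t. \<bar>X w t\<bar> \<le> c" and bX': "\<And>w t. \<bar>X' w t\<bar> \<le> c"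
  shows "F \<in> borel_measurable (Pi\<^sub>M UNIV (\<lambda>_. borel)) \<Longrightarrow> (\<And>y. \<bar>F y\<bar> \<le> B) \<Longrightarrow> (\<forall>h\<in>set hs. integrable lborel h) \<Longrightarrow>
     (\<integral>w. F (X w) * (\<Prod>h\<leftarrow>hs. \<integral>u. X w u * h u \<partial>lborel) \<partial>M)
   = (\<integral>w. F (X' w) * (\<Prod>h\<leftarrow>hs. \<integral>u. X' w u * h u \<partial>lborel) \<partial>M)"
proof (induction hs arbitrary: F B)
  case Nil
  then show ?case using law_integral[OF Xm X'm law Nil(1)] by simp
next
  case (Cons h hs)
  have c0: "c \<ge> 0" using bX[of undefined 0] by simp
  have h: "integrable lborel h" and hs: "\<forall>h\<in>set hs. integrable lborel h" using Cons.prems by auto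
  have inner: "(\<integral>w. F (X w) * trunc c (X w u) * (\<Prod>h\<leftarrow>hs. \<integral>u. X w u * h u \<partial>lborel) \<partial>M)
      = (\<integral>w. F (X' w) * trunc c (X' w u) * (\<Prod>h\<leftarrow>hs. \<integral>u. X' w u * h u \<partial>lborel) \<partial>M)" for u
  proof -
    have Fm: "(\<lambda>y. F y * trunc c (y u)) \<in> borel_measurable (Pi\<^sub>M UNIV (\<lambda>_. borel))"
    proof (intro borel_measurable_times Cons.prems(1))
      show "(\<lambda>y. trunc c (y u)) \<in> borel_measurable (Pi\<^sub>M UNIV (\<lambda>_. borel))"
        by (rule measurable_compose[OF measurable_component_singleton[of u UNIV "\<lambda>_. borel"] trunc_meas[of c]]) simp
    qed
    have "\<bar>F y * trunc c (y u)\<bar> \<le> B * c" for y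
      unfolding abs_mult by (intro mult_mono Cons.prems(2) trunc_bound c0) (use Cons.prems(2)[of y] in auto)
    from Cons.IH[OF Fm this hs] show ?thesis by simp
  qed
  show ?case
    using moment_step[OF M Xm bX Cons.prems(1,2) h hs] moment_step[OF M X'm bX' Cons.prems(1,2) h hs] inner
    by simp
qed

definition Zc :: "('a \<Rightarrow> real \<Rightarrow> real) \<Rightarrow> (real \<Rightarrow> complex) \<Rightarrow> 'a \<Rightarrow> complex" where
  "Zc X \<phi> w = (\<integral>u. complex_of_real (X w u) * \<phi> u \<partial>lborel)"

lemma jm_cmult:
  fixes \<phi> :: "real \<Rightarrow> complex"
  assumes Xm: "(\<lambda>(w,t). X w t) \<in> borel_measurable (M \<Otimes>\<^sub>M lborel)"
    and h: "\<phi> \<in> borel_measurable borel"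
  shows "(\<lambda>(w,u). complex_of_real (X w u) * \<phi> u) \<in> borel_measurable (M \<Otimes>\<^sub>M lborel)"
proof -
  have Xm': "(\<lambda>x. X (fst x) (snd x)) \<in> borel_measurable (M \<Otimes>\<^sub>M lborel)" using Xm by (simp add: case_prod_beta')
  have "(\<lambda>x. complex_of_real (X (fst x) (snd x))) \<in> borel_measurable (M \<Otimes>\<^sub>M lborel)"
    using measurable_compose[OF Xm' borel_measurable_of_real] by simp
  from borel_measurable_times[OF this jm_snd[OF h]]
  have "(\<lambda>x. complex_of_real (X (fst x) (snd x)) * \<phi> (snd x)) \<in> borel_measurable (M \<Otimes>\<^sub>M lborel)" .
  then show ?thesis by (simp add: case_prod_beta)
qed

lemma Zc_meas:
  assumes Xm: "(\<lambda>(w,t). X w t) \<in> borel_measurable (M \<Otimes>\<^sub>M lborel)"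
    and h: "\<phi> \<in> borel_measurable borel"
  shows "Zc X \<phi> \<in> borel_measurable M"
  unfolding Zc_def
  by (rule lborel.borel_measurable_lebesgue_integral) (use jm_cmult[OF Xm h] in simp)

lemma Zc_bound:
  assumes "integrable lborel \<phi>" "\<And>u. \<bar>X w u\<bar> \<le> c"
  shows "norm (Zc X \<phi> w) \<le> c * (\<integral>u. norm (\<phi> u) \<partial>lborel)"
proof (cases "integrable lborel (\<lambda>u. complex_of_real (X w u) * \<phi> u)")
  case True
  have "norm (Zc X \<phi> w) \<le> (\<integral>u. norm (complex_of_real (X w u) * \<phi> u) \<partial>lborel)"
    unfolding Zc_def by (rule integral_norm_bound)
  also have "\<dots> \<le> (\<integral>u. c * norm (\<phi> u) \<partial>lborel)"
  proof (rule integral_mono)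
    show "integrable lborel (\<lambda>u. norm (complex_of_real (X w u) * \<phi> u))" using True by (rule integrable_norm)
    show "integrable lborel (\<lambda>u. c * norm (\<phi> u))" using assms(1) by (intro integrable_mult_right integrable_norm)
    show "norm (complex_of_real (X w u) * \<phi> u) \<le> c * norm (\<phi> u)" for u
      using assms(2)[of u] by (simp add: norm_mult mult_right_mono)
  qed
  finally show ?thesis by simp
next
  case False
  have c0: "c \<ge> 0" using assms(2)[of 0] by simp
  then show ?thesis using False unfolding Zc_def by (simp add: not_integrable_integral_eq)
qed

lemma row_integrable:
  fixes \<phi> :: "real \<Rightarrow> complex"
  assumes Xm: "(\<lambda>(w,t). X w t) \<in> borel_measurable (M \<Otimes>\<^sub>M lborel)" and w: "w \<in> space M"
    and bX: "\<And>u. \<bar>X w u\<bar> \<le> c" and i: "integrable lborel \<phi>"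
  shows "integrable lborel (\<lambda>u. complex_of_real (X w u) * \<phi> u)"
proof (rule Bochner_Integration.integrable_bound[of _ "\<lambda>u. c * norm (\<phi> u)"])
  show "integrable lborel (\<lambda>u. c * norm (\<phi> u))" using i by (intro integrable_mult_right integrable_norm)
  have "(\<lambda>u. X w u) \<in> borel_measurable lborel" using measurable_Pair2[OF Xm w] by simp
  then have a: "(\<lambda>u. complex_of_real (X w u)) \<in> borel_measurable lborel" by (rule measurable_compose[OF _ borel_measurable_of_real])
  have b: "\<phi> \<in> borel_measurable lborel" using i by auto
  show "(\<lambda>u. complex_of_real (X w u) * \<phi> u) \<in> borel_measurable lborel"
    by (rule borel_measurable_times[OF a b]) 
  show "AE x in lborel. norm (complex_of_real (X w x) * \<phi> x) \<le> norm (c * norm (\<phi> x))"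
  proof (intro AE_I2)
    fix x
    have "norm (complex_of_real (X w x) * \<phi> x) = \<bar>X w x\<bar> * norm (\<phi> x)" by (simp add: norm_mult)
    also have "\<dots> \<le> c * norm (\<phi> x)" by (rule mult_right_mono[OF bX]) simp
    also have "\<dots> \<le> norm (c * norm (\<phi> x))" by simp
    finally show "norm (complex_of_real (X w x) * \<phi> x) \<le> norm (c * norm (\<phi> x))" .
  qed
qed

lemma linear_Z:
  fixes L :: "complex \<times> complex \<Rightarrow> real"
  assumes L: "bounded_linear L"
    and r1: "integrable lborel (\<lambda>u. complex_of_real (Y u) * \<phi>1 u)"
    and r2: "integrable lborel (\<lambda>u. complex_of_real (Y u) * \<phi>2 u)"
  shows "L (\<integral>u. complex_of_real (Y u) * \<phi>1 u \<partial>lborel, \<integral>u. complex_of_real (Y u) * \<phi>2 u \<partial>lborel)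
       = (\<integral>u. Y u * (L (\<phi>1 u, 0) + L (0, \<phi>2 u)) \<partial>lborel)"
proof -
  interpret L: bounded_linear L by (rule L)
  have L1: "bounded_linear (\<lambda>z. L (z, 0))"
    using bounded_linear_compose[OF L bounded_linear_Pair[OF bounded_linear_ident bounded_linear_zero]] by simp
  have L2: "bounded_linear (\<lambda>z. L (0, z))"
    using bounded_linear_compose[OF L bounded_linear_Pair[OF bounded_linear_zero bounded_linear_ident]] by simp
  interpret L1: bounded_linear "\<lambda>z. L (z, 0)" by (rule L1)
  interpret L2: bounded_linear "\<lambda>z. L (0, z)" by (rule L2)
  have split: "L (a, b) = L (a, 0) + L (0, b)" for a b
    using L.add[of "(a,0)" "(0,b)"] by simp
  have sc1: "L (complex_of_real x * z, 0) = x * L (z, 0)" for x z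
    using L1.scaleR[of x z] by (simp add: scaleR_conv_of_real)
  have sc2: "L (0, complex_of_real x * z) = x * L (0, z)" for x z
    using L2.scaleR[of x z] by (simp add: scaleR_conv_of_real)
  have e1: "L (\<integral>u. complex_of_real (Y u) * \<phi>1 u \<partial>lborel, 0) = (\<integral>u. Y u * L (\<phi>1 u, 0) \<partial>lborel)"
    using integral_bounded_linear[OF L1 r1, symmetric] by (simp add: sc1)
  have e2: "L (0, \<integral>u. complex_of_real (Y u) * \<phi>2 u \<partial>lborel) = (\<integral>u. Y u * L (0, \<phi>2 u) \<partial>lborel)"
    using integral_bounded_linear[OF L2 r2, symmetric] by (simp add: sc2)
  have i1: "integrable lborel (\<lambda>u. Y u * L (\<phi>1 u, 0))"
    using integrable_bounded_linear[OF L1 r1] by (simp add: sc1)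
  have i2: "integrable lborel (\<lambda>u. Y u * L (0, \<phi>2 u))"
    using integrable_bounded_linear[OF L2 r2] by (simp add: sc2)
  show ?thesis
    unfolding split[of "\<integral>u. complex_of_real (Y u) * \<phi>1 u \<partial>lborel" "\<integral>u. complex_of_real (Y u) * \<phi>2 u \<partial>lborel"] e1 e2
    using Bochner_Integration.integral_add[OF i1 i2] by (simp add: distrib_left)
qed

lemma bounded_on_cball:
  fixes q :: "'b::euclidean_space \<Rightarrow> real"
  assumes "continuous_on UNIV q"
  shows "\<exists>Q. \<forall>z. norm z \<le> R \<longrightarrow> \<bar>q z\<bar> \<le> Q"
proof -
  have "compact (q ` cball 0 R)"
    by (rule compact_continuous_image[OF continuous_on_subset[OF assms] compact_cball]) simp
  then have "bounded (q ` cball 0 R)" by (rule compact_imp_bounded)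
  then obtain Q where "\<forall>x\<in>q ` cball 0 R. norm x \<le> Q" unfolding bounded_iff by blast
  then show ?thesis by (intro exI[of _ Q]) auto
qed

lemma prob_abs_integral_le:
  assumes "prob_space M" "integrable M f" "\<And>w. w \<in> space M \<Longrightarrow> \<bar>f w\<bar> \<le> (e::real)"
  shows "\<bar>\<integral>w. f w \<partial>M\<bar> \<le> e"
proof -
  interpret prob_space M by (rule assms(1))
  have "\<bar>\<integral>w. f w \<partial>M\<bar> \<le> (\<integral>w. \<bar>f w\<bar> \<partial>M)" by (rule integral_abs_bound)
  also have "\<dots> \<le> (\<integral>w. e \<partial>M)"
    by (rule integral_mono) (use assms in \<open>auto intro: integrable_abs\<close>)
  also have "\<dots> = e" using prob_space by simp
  finally show ?thesis .
qed

locale core =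
  fixes M :: "'a measure" and X X' :: "'a \<Rightarrow> real \<Rightarrow> real" and \<phi>1 \<phi>2 :: "real \<Rightarrow> complex" and c :: real
  assumes M: "prob_space M"
    and Xm: "(\<lambda>(w,t). X w t) \<in> borel_measurable (M \<Otimes>\<^sub>M lborel)"
    and X'm: "(\<lambda>(w,t). X' w t) \<in> borel_measurable (M \<Otimes>\<^sub>M lborel)"
    and law: "process_law M X = process_law M X'"
    and bX: "\<And>w t. \<bar>X w t\<bar> \<le> c" and bX': "\<And>w t. \<bar>X' w t\<bar> \<le> c"
    and i1: "integrable lborel \<phi>1" and i2: "integrable lborel \<phi>2"
begin

definition Zp where "Zp Y w = (Zc Y \<phi>1 w, Zc Y \<phi>2 w)"
definition R where "R = c * ((\<integral>u. norm (\<phi>1 u) \<partial>lborel) + (\<integral>u. norm (\<phi>2 u) \<partial>lborel))"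

lemma Zp_bound:
  assumes bY: "\<And>w t. \<bar>Y w t\<bar> \<le> c"
  shows "norm (Zp Y w) \<le> R"
proof -
  have "norm (Zp Y w) \<le> norm (Zc Y \<phi>1 w) + norm (Zc Y \<phi>2 w)" unfolding Zp_def by (rule norm_Pair_le)
  also have "\<dots> \<le> c * (\<integral>u. norm (\<phi>1 u) \<partial>lborel) + c * (\<integral>u. norm (\<phi>2 u) \<partial>lborel)"
    by (intro add_mono Zc_bound i1 i2 bY)
  finally show ?thesis unfolding R_def by (simp add: distrib_left)
qed

lemma Zp_meas:
  assumes Ym: "(\<lambda>(w,t). Y w t) \<in> borel_measurable (M \<Otimes>\<^sub>M lborel)"
  shows "Zp Y \<in> borel_measurable M"
proof -
  have "\<phi>1 \<in> borel_measurable borel" "\<phi>2 \<in> borel_measurable borel" using i1 i2 by auto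
  from borel_measurable_Pair[OF Zc_meas[OF Ym this(1)] Zc_meas[OF Ym this(2)]]
  show ?thesis unfolding Zp_def[abs_def] .
qed

definition EE :: "('a \<Rightarrow> real \<Rightarrow> real) \<Rightarrow> ((real \<Rightarrow> real) \<Rightarrow> real) \<Rightarrow> (complex \<times> complex \<Rightarrow> real) \<Rightarrow> (real \<Rightarrow> real) list \<Rightarrow> real" where
  "EE Y F q hs = (\<integral>w. F (Y w) * q (Zp Y w) * (\<Prod>h\<leftarrow>hs. \<integral>u. Y w u * h u \<partial>lborel) \<partial>M)"

definition good :: "(complex \<times> complex \<Rightarrow> real) \<Rightarrow> bool" where
  "good q \<longleftrightarrow> continuous_on UNIV q \<and> (\<forall>(F::(real \<Rightarrow> real) \<Rightarrow> real) (B::real) (hs::(real \<Rightarrow> real) list). F \<in> borel_measurable (Pi\<^sub>M UNIV (\<lambda>_. borel)) \<longrightarrow>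
      (\<forall>y. \<bar>F y\<bar> \<le> B) \<longrightarrow> (\<forall>h\<in>set hs. integrable lborel h) \<longrightarrow> EE X F q hs = EE X' F q hs)"

lemma EE_integrable:
  assumes Ym: "(\<lambda>(w,t). Y w t) \<in> borel_measurable (M \<Otimes>\<^sub>M lborel)" and bY: "\<And>w t. \<bar>Y w t\<bar> \<le> c"
    and q: "continuous_on UNIV q"
    and F: "F \<in> borel_measurable (Pi\<^sub>M UNIV (\<lambda>_. borel))" and bF: "\<And>y. \<bar>F y\<bar> \<le> B"
    and hs: "\<forall>h\<in>set hs. integrable lborel h"
  shows "integrable M (\<lambda>w. F (Y w) * q (Zp Y w) * (\<Prod>h\<leftarrow>hs. \<integral>u. Y w u * h u \<partial>lborel))"
proof -
  interpret prob_space M by (rule M)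
  have FYm: "(\<lambda>w. F (Y w)) \<in> borel_measurable M" by (rule measurable_comp[OF proc_meas_Pi[OF Ym] F, unfolded comp_def])
  have qm: "(\<lambda>w. q (Zp Y w)) \<in> borel_measurable M"
    by (rule measurable_compose[OF Zp_meas[OF Ym] borel_measurable_continuous_onI[OF q]])
  have Pm: "(\<lambda>w. \<Prod>h\<leftarrow>hs. \<integral>u. Y w u * h u \<partial>lborel) \<in> borel_measurable M" by (rule P_meas[OF Ym hs])
  have "\<exists>K. \<forall>w. \<bar>\<Prod>h\<leftarrow>hs. \<integral>u. Y w u * h u \<partial>lborel\<bar> \<le> K" by (rule P_bound[OF hs]) (rule bY)
  then obtain K where K: "\<And>w. \<bar>\<Prod>h\<leftarrow>hs. \<integral>u. Y w u * h u \<partial>lborel\<bar> \<le> K" by blast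
  obtain Q where Q: "\<And>z. norm z \<le> R \<Longrightarrow> \<bar>q z\<bar> \<le> Q" using bounded_on_cball[OF q, of R] by blast
  show ?thesis
  proof (rule integrable_const_bound[where B="B * Q * K"])
    show "AE w in M. norm (F (Y w) * q (Zp Y w) * (\<Prod>h\<leftarrow>hs. \<integral>u. Y w u * h u \<partial>lborel)) \<le> B * Q * K"
    proof (rule AE_I2)
      fix w
      have B0: "B \<ge> 0" using bF[of "\<lambda>_. 0"] by linarith
      have zb: "norm (Zp Y w) \<le> R" by (rule Zp_bound) (rule bY)
      have Qw: "\<bar>q (Zp Y w)\<bar> \<le> Q" by (rule Q[OF zb])
      have Q0: "Q \<ge> 0" using Qw by linarith
      show "norm (F (Y w) * q (Zp Y w) * (\<Prod>h\<leftarrow>hs. \<integral>u. Y w u * h u \<partial>lborel)) \<le> B * Q * K"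
        unfolding real_norm_def abs_mult
        by (intro mult_mono bF Qw K mult_nonneg_nonneg B0 Q0) auto
    qed
    show "(\<lambda>w. F (Y w) * q (Zp Y w) * (\<Prod>h\<leftarrow>hs. \<integral>u. Y w u * h u \<partial>lborel)) \<in> borel_measurable M"
      by (intro borel_measurable_times FYm qm Pm)
  qed
qed

lemma good_one: "good (\<lambda>_. 1)"
  unfolding good_def
proof (intro conjI allI impI)
  show "continuous_on UNIV (\<lambda>_::complex \<times> complex. 1::real)" by simp
  fix F :: "(real \<Rightarrow> real) \<Rightarrow> real" and B :: real and hs :: "(real \<Rightarrow> real) list"
  assume F: "F \<in> borel_measurable (Pi\<^sub>M UNIV (\<lambda>_. borel))" and bF: "\<forall>y. \<bar>F y\<bar> \<le> B"
    and hs: "\<forall>h\<in>set hs. integrable lborel h"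
  have bF': "\<And>y. \<bar>F y\<bar> \<le> B" using bF by blast
  show "EE X F (\<lambda>_. 1) hs = EE X' F (\<lambda>_. 1) hs"
    unfolding EE_def using moments_eq[OF M Xm X'm law bX bX' F bF' hs] by simp
qed

lemma EE_lin:
  assumes Ym: "(\<lambda>(w,t). Y w t) \<in> borel_measurable (M \<Otimes>\<^sub>M lborel)" and bY: "\<And>w t. \<bar>Y w t\<bar> \<le> c"
    and L: "bounded_linear L"
  shows "EE Y F (\<lambda>z. L z * q z) hs = EE Y F q ((\<lambda>u. L (\<phi>1 u, 0) + L (0, \<phi>2 u)) # hs)"
  unfolding EE_def
proof (intro Bochner_Integration.integral_cong refl)
  fix w assume w: "w \<in> space M"
  have "L (Zp Y w) = (\<integral>u. Y w u * (L (\<phi>1 u, 0) + L (0, \<phi>2 u)) \<partial>lborel)"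
    unfolding Zp_def Zc_def
    by (rule linear_Z[OF L row_integrable[OF Ym w bY i1] row_integrable[OF Ym w bY i2]])
  then show "F (Y w) * (L (Zp Y w) * q (Zp Y w)) * (\<Prod>h\<leftarrow>hs. \<integral>u. Y w u * h u \<partial>lborel) =
         F (Y w) * q (Zp Y w) * (\<Prod>h\<leftarrow>(\<lambda>u. L (\<phi>1 u, 0) + L (0, \<phi>2 u)) # hs. \<integral>u. Y w u * h u \<partial>lborel)"
    by simp
qed

lemma good_lin:
  assumes L: "bounded_linear L" and q: "good q"
  shows "good (\<lambda>z. L z * q z)"
proof -
  have hL: "integrable lborel (\<lambda>u. L (\<phi>1 u, 0) + L (0, \<phi>2 u))"
  proof -
    have L1: "bounded_linear (\<lambda>z. L (z, 0))"
      using bounded_linear_compose[OF L bounded_linear_Pair[OF bounded_linear_ident bounded_linear_zero]] by simp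
    have L2: "bounded_linear (\<lambda>z. L (0, z))"
      using bounded_linear_compose[OF L bounded_linear_Pair[OF bounded_linear_zero bounded_linear_ident]] by simp
    show ?thesis
      by (intro Bochner_Integration.integrable_add integrable_bounded_linear[OF L1 i1] integrable_bounded_linear[OF L2 i2])
  qed
  have cont: "continuous_on UNIV (\<lambda>z. L z * q z)"
    using q unfolding good_def by (intro continuous_on_mult linear_continuous_on[OF L]) auto
  show ?thesis
    unfolding good_def
  proof (intro conjI cont allI impI)
    fix F :: "(real \<Rightarrow> real) \<Rightarrow> real" and B :: real and hs :: "(real \<Rightarrow> real) list"
    assume F: "F \<in> borel_measurable (Pi\<^sub>M UNIV (\<lambda>_. borel))" and bF: "\<forall>y. \<bar>F y\<bar> \<le> B"
      and hs: "\<forall>h\<in>set hs. integrable lborel h"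
    have hs': "\<forall>h\<in>set ((\<lambda>u. L (\<phi>1 u, 0) + L (0, \<phi>2 u)) # hs). integrable lborel h" using hs hL by simp
    show "EE X F (\<lambda>z. L z * q z) hs = EE X' F (\<lambda>z. L z * q z) hs"
      unfolding EE_lin[OF Xm bX L] EE_lin[OF X'm bX' L]
      using q F bF hs' unfolding good_def by blast
  qed
qed

lemma good_const:
  assumes q: "good q"
  shows "good (\<lambda>z. a * q z)"
  unfolding good_def
proof (intro conjI allI impI)
  show "continuous_on UNIV (\<lambda>z. a * q z)" using q unfolding good_def by (intro continuous_intros) auto
  fix F :: "(real \<Rightarrow> real) \<Rightarrow> real" and B :: real and hs :: "(real \<Rightarrow> real) list"
  assume F: "F \<in> borel_measurable (Pi\<^sub>M UNIV (\<lambda>_. borel))" and bF: "\<forall>y. \<bar>F y\<bar> \<le> B"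
    and hs: "\<forall>h\<in>set hs. integrable lborel h"
  have F': "(\<lambda>y. a * F y) \<in> borel_measurable (Pi\<^sub>M UNIV (\<lambda>_. borel))" using F by (rule borel_measurable_times[OF borel_measurable_const])
  have bF': "\<forall>y. \<bar>a * F y\<bar> \<le> \<bar>a\<bar> * B" using bF by (simp add: abs_mult mult_left_mono)
  have e: "EE Y F (\<lambda>z. a * q z) hs = EE Y (\<lambda>y. a * F y) q hs" for Y
    unfolding EE_def by (simp add: algebra_simps)
  show "EE X F (\<lambda>z. a * q z) hs = EE X' F (\<lambda>z. a * q z) hs"
    unfolding e using q F' bF' hs unfolding good_def by blast
qed

lemma good_add:
  assumes q1: "good q1" and q2: "good q2"
  shows "good (\<lambda>z. q1 z + q2 z)"
  unfolding good_def
proof (intro conjI allI impI)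
  have c1: "continuous_on UNIV q1" and c2: "continuous_on UNIV q2" using q1 q2 unfolding good_def by auto
  show "continuous_on UNIV (\<lambda>z. q1 z + q2 z)" using c1 c2 by (intro continuous_intros)
  fix F :: "(real \<Rightarrow> real) \<Rightarrow> real" and B :: real and hs :: "(real \<Rightarrow> real) list"
  assume F: "F \<in> borel_measurable (Pi\<^sub>M UNIV (\<lambda>_. borel))" and bF: "\<forall>y. \<bar>F y\<bar> \<le> B"
    and hs: "\<forall>h\<in>set hs. integrable lborel h"
  have e: "EE Y F (\<lambda>z. q1 z + q2 z) hs = EE Y F q1 hs + EE Y F q2 hs"
    if Ym: "(\<lambda>(w,t). Y w t) \<in> borel_measurable (M \<Otimes>\<^sub>M lborel)" and bY: "\<And>w t. \<bar>Y w t\<bar> \<le> c" for Y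
  proof -
    have "EE Y F (\<lambda>z. q1 z + q2 z) hs = (\<integral>w. F (Y w) * q1 (Zp Y w) * (\<Prod>h\<leftarrow>hs. \<integral>u. Y w u * h u \<partial>lborel)
        + F (Y w) * q2 (Zp Y w) * (\<Prod>h\<leftarrow>hs. \<integral>u. Y w u * h u \<partial>lborel) \<partial>M)"
      unfolding EE_def by (simp add: algebra_simps)
    also have "\<dots> = EE Y F q1 hs + EE Y F q2 hs"
      unfolding EE_def
    proof (rule Bochner_Integration.integral_add)
      show "integrable M (\<lambda>w. F (Y w) * q1 (Zp Y w) * (\<Prod>h\<leftarrow>hs. \<integral>u. Y w u * h u \<partial>lborel))"
        by (rule EE_integrable[OF Ym _ c1 F _ hs]) (use bY bF in auto)
      show "integrable M (\<lambda>w. F (Y w) * q2 (Zp Y w) * (\<Prod>h\<leftarrow>hs. \<integral>u. Y w u * h u \<partial>lborel))"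
        by (rule EE_integrable[OF Ym _ c2 F _ hs]) (use bY bF in auto)
    qed
    finally show ?thesis .
  qed
  show "EE X F (\<lambda>z. q1 z + q2 z) hs = EE X' F (\<lambda>z. q1 z + q2 z) hs"
    unfolding e[OF Xm bX] e[OF X'm bX'] using q1 q2 F bF hs unfolding good_def by metis
qed

lemma poly_mulgood:
  assumes "real_polynomial_function p"
  shows "\<forall>q. good q \<longrightarrow> good (\<lambda>z. p z * q z)"
  using assms
proof (induction p rule: real_polynomial_function.induct)
  case (linear f) then show ?case using good_lin by blast
next
  case (const a) then show ?case using good_const by blast
next
  case (add f g)
  show ?case
  proof (intro allI impI)
    fix q assume "good q"
    then have "good (\<lambda>z. f z * q z + g z * q z)" using add.IH by (intro good_add) auto
    then show "good (\<lambda>z. (f z + g z) * q z)" by (simp add: distrib_right)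
  qed
next
  case (mult f g)
  show ?case
  proof (intro allI impI)
    fix q assume "good q"
    then have "good (\<lambda>z. f z * (g z * q z))" using mult.IH by blast
    then show "good (\<lambda>z. (f z * g z) * q z)" by (simp add: mult.assoc)
  qed
qed

lemma poly_eq:
  assumes "real_polynomial_function p"
  shows "(\<integral>w. p (Zp X w) \<partial>M) = (\<integral>w. p (Zp X' w) \<partial>M)"
proof -
  have "good (\<lambda>z. p z * 1)" using poly_mulgood[OF assms] good_one by blast
  then have "EE X (\<lambda>_. 1) (\<lambda>z. p z * 1) [] = EE X' (\<lambda>_. 1) (\<lambda>z. p z * 1) []"
    unfolding good_def by (metis abs_one borel_measurable_const empty_iff list.set(1) order_refl)
  then show ?thesis unfolding EE_def by simp
qed

lemma cont_eq:
  fixes g :: "complex \<times> complex \<Rightarrow> real"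
  assumes g: "continuous_on UNIV g"
  shows "(\<integral>w. g (Zp X w) \<partial>M) = (\<integral>w. g (Zp X' w) \<partial>M)"
proof -
  have ig: "integrable M (\<lambda>w. g (Zp Y w))"
    if Ym: "(\<lambda>(w,t). Y w t) \<in> borel_measurable (M \<Otimes>\<^sub>M lborel)" and bY: "\<And>w t. \<bar>Y w t\<bar> \<le> c" for Y
  proof -
    have "integrable M (\<lambda>w. (\<lambda>_. 1) (Y w) * g (Zp Y w) * (\<Prod>h\<leftarrow>[]. \<integral>u. Y w u * h u \<partial>lborel))"
      by (rule EE_integrable[OF Ym _ g, of _ 1]) (use bY in auto)
    then show ?thesis by simp
  qed
  have main: "\<bar>(\<integral>w. g (Zp X w) \<partial>M) - (\<integral>w. g (Zp X' w) \<partial>M)\<bar> \<le> 2 * e" if e: "e > 0" for e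
  proof -
    obtain p where p: "real_polynomial_function p" and pe: "\<And>z. z \<in> cball 0 R \<Longrightarrow> \<bar>g z - p z\<bar> < e"
      using Stone_Weierstrass_real_polynomial_function[OF compact_cball continuous_on_subset[OF g] e] by blast
    have pc: "continuous_on UNIV p" using p continuous_on_polymonial_function real_polynomial_function_eq by blast
    have close: "\<bar>(\<integral>w. g (Zp Y w) \<partial>M) - (\<integral>w. p (Zp Y w) \<partial>M)\<bar> \<le> e"
      if Ym: "(\<lambda>(w,t). Y w t) \<in> borel_measurable (M \<Otimes>\<^sub>M lborel)" and bY: "\<And>w t. \<bar>Y w t\<bar> \<le> c" for Y
    proof -
      have "integrable M (\<lambda>w. (\<lambda>_. 1) (Y w) * p (Zp Y w) * (\<Prod>h\<leftarrow>[]. \<integral>u. Y w u * h u \<partial>lborel))"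
        by (rule EE_integrable[OF Ym _ pc, of _ 1]) (use bY in auto)
      then have ip: "integrable M (\<lambda>w. p (Zp Y w))" by simp
      have "(\<integral>w. g (Zp Y w) \<partial>M) - (\<integral>w. p (Zp Y w) \<partial>M) = (\<integral>w. g (Zp Y w) - p (Zp Y w) \<partial>M)"
        by (rule Bochner_Integration.integral_diff[OF ig[OF Ym bY] ip, symmetric])
      also have "\<bar>\<dots>\<bar> \<le> e"
      proof (rule prob_abs_integral_le[OF M])
        show "integrable M (\<lambda>w. g (Zp Y w) - p (Zp Y w))" using ig[OF Ym bY] ip by auto
        fix w show "\<bar>g (Zp Y w) - p (Zp Y w)\<bar> \<le> e"
        proof -
          have "norm (Zp Y w) \<le> R" by (rule Zp_bound) (rule bY)
          then show ?thesis using pe[of "Zp Y w"] by auto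
        qed
      qed
      finally show ?thesis .
    qed
    show ?thesis using close[OF Xm bX] close[OF X'm bX'] poly_eq[OF p] by linarith
  qed
  show ?thesis
  proof (rule ccontr)
    assume ne: "(\<integral>w. g (Zp X w) \<partial>M) \<noteq> (\<integral>w. g (Zp X' w) \<partial>M)"
    define d where "d = \<bar>(\<integral>w. g (Zp X w) \<partial>M) - (\<integral>w. g (Zp X' w) \<partial>M)\<bar>"
    have "d > 0" using ne unfolding d_def by simp
    from main[of "d / 4"] this show False unfolding d_def[symmetric] by simp
  qed
qed

end

lemma trunc_tendsto: "(\<lambda>n. trunc (real n) x) \<longlonglongrightarrow> x"
proof (rule tendsto_eventually)
  show "\<forall>\<^sub>F n in sequentially. trunc (real n) x = x"
  proof (rule eventually_sequentiallyI[of "nat \<lceil>\<bar>x\<bar>\<rceil>"])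
    fix n assume "nat \<lceil>\<bar>x\<bar>\<rceil> \<le> n"
    then have "\<bar>x\<bar> \<le> real n" by linarith
    then show "trunc (real n) x = x" by (rule trunc_id)
  qed
qed

lemma trunc_abs_le: "c \<ge> 0 \<Longrightarrow> \<bar>trunc c x\<bar> \<le> \<bar>x\<bar>"
  unfolding trunc_def by auto

lemma trunc_proc_meas:
  assumes Xm: "(\<lambda>(w,t). X w t) \<in> borel_measurable (M \<Otimes>\<^sub>M lborel)"
  shows "(\<lambda>(w,t). trunc c (X w t)) \<in> borel_measurable (M \<Otimes>\<^sub>M lborel)"
proof -
  have "(\<lambda>x. trunc c ((\<lambda>(w,t). X w t) x)) \<in> borel_measurable (M \<Otimes>\<^sub>M lborel)"
    by (rule measurable_compose[OF Xm trunc_meas])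
  then show ?thesis by (simp add: case_prod_beta')
qed

lemma Zc_trunc_lim:
  assumes Xm: "(\<lambda>(w,t). X w t) \<in> borel_measurable (M \<Otimes>\<^sub>M lborel)" and w: "w \<in> space M"
    and r: "integrable lborel (\<lambda>u. complex_of_real (X w u) * \<phi> u)"
    and \<phi>m: "\<phi> \<in> borel_measurable borel"
  shows "(\<lambda>n. Zc (\<lambda>w t. trunc (real n) (X w t)) \<phi> w) \<longlonglongrightarrow> Zc X \<phi> w"
  unfolding Zc_def
proof (rule integral_dominated_convergence[where w="\<lambda>u. norm (complex_of_real (X w u) * \<phi> u)"])
  have row: "(\<lambda>u. X w u) \<in> borel_measurable lborel" using measurable_Pair2[OF Xm w] by simp
  show "(\<lambda>u. complex_of_real (X w u) * \<phi> u) \<in> borel_measurable lborel" using r by auto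
  show "(\<lambda>u. complex_of_real (trunc (real n) (X w u)) * \<phi> u) \<in> borel_measurable lborel" for n
  proof -
    have "(\<lambda>u. trunc (real n) (X w u)) \<in> borel_measurable lborel"
      by (rule measurable_compose[OF row trunc_meas])
    then have "(\<lambda>u. complex_of_real (trunc (real n) (X w u))) \<in> borel_measurable lborel"
      by (rule measurable_compose[OF _ borel_measurable_of_real])
    then show ?thesis using \<phi>m by (intro borel_measurable_times) auto
  qed
  show "integrable lborel (\<lambda>u. norm (complex_of_real (X w u) * \<phi> u))" using r by (rule integrable_norm)
  show "AE u in lborel. (\<lambda>n. complex_of_real (trunc (real n) (X w u)) * \<phi> u) \<longlonglongrightarrow> complex_of_real (X w u) * \<phi> u"
    by (intro AE_I2 tendsto_mult tendsto_of_real trunc_tendsto tendsto_const)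
  show "AE u in lborel. norm (complex_of_real (trunc (real n) (X w u)) * \<phi> u) \<le> norm (complex_of_real (X w u) * \<phi> u)" for n
    by (intro AE_I2) (simp add: norm_mult mult_right_mono trunc_abs_le)
qed

lemma g_Z_meas:
  fixes g :: "complex \<times> complex \<Rightarrow> 'b::{second_countable_topology, banach}"
  assumes Ym: "(\<lambda>(w,t). Y w t) \<in> borel_measurable (M \<Otimes>\<^sub>M lborel)"
    and m1: "\<phi>1 \<in> borel_measurable borel" and m2: "\<phi>2 \<in> borel_measurable borel"
    and g: "continuous_on UNIV g"
  shows "(\<lambda>w. g (Zc Y \<phi>1 w, Zc Y \<phi>2 w)) \<in> borel_measurable M"
  by (rule measurable_compose[OF borel_measurable_Pair[OF Zc_meas[OF Ym m1] Zc_meas[OF Ym m2]] borel_measurable_continuous_onI[OF g]])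

lemma lim_trunc_int:
  fixes g :: "complex \<times> complex \<Rightarrow> real"
  assumes M: "prob_space M" and Ym: "(\<lambda>(w,t). Y w t) \<in> borel_measurable (M \<Otimes>\<^sub>M lborel)"
    and i1: "integrable lborel \<phi>1" and i2: "integrable lborel \<phi>2"
    and r1: "\<And>w. w \<in> space M \<Longrightarrow> integrable lborel (\<lambda>u. complex_of_real (Y w u) * \<phi>1 u)"
    and r2: "\<And>w. w \<in> space M \<Longrightarrow> integrable lborel (\<lambda>u. complex_of_real (Y w u) * \<phi>2 u)"
    and g: "continuous_on UNIV g" and gb: "\<And>z. \<bar>g z\<bar> \<le> G"
  shows "(\<lambda>n. \<integral>w. g (Zc (\<lambda>w t. trunc (real n) (Y w t)) \<phi>1 w, Zc (\<lambda>w t. trunc (real n) (Y w t)) \<phi>2 w) \<partial>M)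
      \<longlonglongrightarrow> (\<integral>w. g (Zc Y \<phi>1 w, Zc Y \<phi>2 w) \<partial>M)"
proof (rule integral_dominated_convergence[where w="\<lambda>_. G"])
  interpret prob_space M by (rule M)
  have m1: "\<phi>1 \<in> borel_measurable borel" and m2: "\<phi>2 \<in> borel_measurable borel" using i1 i2 by auto
  show "(\<lambda>w. g (Zc Y \<phi>1 w, Zc Y \<phi>2 w)) \<in> borel_measurable M" by (rule g_Z_meas[OF Ym m1 m2 g])
  show "(\<lambda>w. g (Zc (\<lambda>w t. trunc (real n) (Y w t)) \<phi>1 w, Zc (\<lambda>w t. trunc (real n) (Y w t)) \<phi>2 w)) \<in> borel_measurable M" for n
    by (rule g_Z_meas[OF trunc_proc_meas[OF Ym] m1 m2 g])
  show "integrable M (\<lambda>_. G)" by simp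
  show "AE w in M. (\<lambda>n. g (Zc (\<lambda>w t. trunc (real n) (Y w t)) \<phi>1 w, Zc (\<lambda>w t. trunc (real n) (Y w t)) \<phi>2 w))
      \<longlonglongrightarrow> g (Zc Y \<phi>1 w, Zc Y \<phi>2 w)"
  proof (rule AE_I2)
    fix w assume w: "w \<in> space M"
    have "isCont g (Zc Y \<phi>1 w, Zc Y \<phi>2 w)" using g continuous_on_eq_continuous_at[OF open_UNIV] by blast
    then show "(\<lambda>n. g (Zc (\<lambda>w t. trunc (real n) (Y w t)) \<phi>1 w, Zc (\<lambda>w t. trunc (real n) (Y w t)) \<phi>2 w))
      \<longlonglongrightarrow> g (Zc Y \<phi>1 w, Zc Y \<phi>2 w)"
      by (rule isCont_tendsto_compose) (intro tendsto_Pair Zc_trunc_lim[OF Ym w r1[OF w] m1] Zc_trunc_lim[OF Ym w r2[OF w] m2])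
  qed
  show "AE w in M. norm (g (Zc (\<lambda>w t. trunc (real n) (Y w t)) \<phi>1 w, Zc (\<lambda>w t. trunc (real n) (Y w t)) \<phi>2 w)) \<le> G" for n
    using gb by auto
qed

lemma bounded_eq:
  fixes g :: "complex \<times> complex \<Rightarrow> real"
  assumes M: "prob_space M"
    and Xm: "(\<lambda>(w,t). X w t) \<in> borel_measurable (M \<Otimes>\<^sub>M lborel)"
    and X'm: "(\<lambda>(w,t). X' w t) \<in> borel_measurable (M \<Otimes>\<^sub>M lborel)"
    and law: "process_law M X = process_law M X'"
    and i1: "integrable lborel \<phi>1" and i2: "integrable lborel \<phi>2"
    and r1: "\<And>w. w \<in> space M \<Longrightarrow> integrable lborel (\<lambda>u. complex_of_real (X w u) * \<phi>1 u)"
    and r2: "\<And>w. w \<in> space M \<Longrightarrow> integrable lborel (\<lambda>u. complex_of_real (X w u) * \<phi>2 u)"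
    and r1': "\<And>w. w \<in> space M \<Longrightarrow> integrable lborel (\<lambda>u. complex_of_real (X' w u) * \<phi>1 u)"
    and r2': "\<And>w. w \<in> space M \<Longrightarrow> integrable lborel (\<lambda>u. complex_of_real (X' w u) * \<phi>2 u)"
    and g: "continuous_on UNIV g" and gb: "\<And>z. \<bar>g z\<bar> \<le> G"
  shows "(\<integral>w. g (Zc X \<phi>1 w, Zc X \<phi>2 w) \<partial>M) = (\<integral>w. g (Zc X' \<phi>1 w, Zc X' \<phi>2 w) \<partial>M)"
proof -
  have eqn: "(\<integral>w. g (Zc (\<lambda>w t. trunc (real n) (X w t)) \<phi>1 w, Zc (\<lambda>w t. trunc (real n) (X w t)) \<phi>2 w) \<partial>M)
     = (\<integral>w. g (Zc (\<lambda>w t. trunc (real n) (X' w t)) \<phi>1 w, Zc (\<lambda>w t. trunc (real n) (X' w t)) \<phi>2 w) \<partial>M)" for n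
  proof -
    have cr: "core M (\<lambda>w t. trunc (real n) (X w t)) (\<lambda>w t. trunc (real n) (X' w t)) \<phi>1 \<phi>2 (real n)"
    proof (rule core.intro[OF M trunc_proc_meas[OF Xm] trunc_proc_meas[OF X'm] law_map[OF Xm X'm law trunc_meas] _ _ i1 i2])
      show "\<bar>trunc (real n) (X w t)\<bar> \<le> real n" for w t by (rule trunc_bound) simp
      show "\<bar>trunc (real n) (X' w t)\<bar> \<le> real n" for w t by (rule trunc_bound) simp
    qed
    interpret core M "\<lambda>w t. trunc (real n) (X w t)" "\<lambda>w t. trunc (real n) (X' w t)" \<phi>1 \<phi>2 "real n" by (rule cr)
    show ?thesis using cont_eq[OF g] unfolding Zp_def .
  qed
  note l1 = lim_trunc_int[OF M Xm i1 i2 r1 r2 g gb]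
  note l2 = lim_trunc_int[OF M X'm i1 i2 r1' r2' g gb]
  from l1 have "(\<lambda>n. \<integral>w. g (Zc (\<lambda>w t. trunc (real n) (X' w t)) \<phi>1 w, Zc (\<lambda>w t. trunc (real n) (X' w t)) \<phi>2 w) \<partial>M)
      \<longlonglongrightarrow> (\<integral>w. g (Zc X \<phi>1 w, Zc X \<phi>2 w) \<partial>M)" unfolding eqn .
  from LIMSEQ_unique[OF this l2] show ?thesis .
qed

lemma bounded_eq_complex:
  fixes g :: "complex \<times> complex \<Rightarrow> complex"
  assumes M: "prob_space M"
    and Xm: "(\<lambda>(w,t). X w t) \<in> borel_measurable (M \<Otimes>\<^sub>M lborel)"
    and X'm: "(\<lambda>(w,t). X' w t) \<in> borel_measurable (M \<Otimes>\<^sub>M lborel)"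
    and law: "process_law M X = process_law M X'"
    and i1: "integrable lborel \<phi>1" and i2: "integrable lborel \<phi>2"
    and r1: "\<And>w. w \<in> space M \<Longrightarrow> integrable lborel (\<lambda>u. complex_of_real (X w u) * \<phi>1 u)"
    and r2: "\<And>w. w \<in> space M \<Longrightarrow> integrable lborel (\<lambda>u. complex_of_real (X w u) * \<phi>2 u)"
    and r1': "\<And>w. w \<in> space M \<Longrightarrow> integrable lborel (\<lambda>u. complex_of_real (X' w u) * \<phi>1 u)"
    and r2': "\<And>w. w \<in> space M \<Longrightarrow> integrable lborel (\<lambda>u. complex_of_real (X' w u) * \<phi>2 u)"
    and g: "continuous_on UNIV g" and gb: "\<And>z. norm (g z) \<le> G"
  shows "(\<integral>w. g (Zc X \<phi>1 w, Zc X \<phi>2 w) \<partial>M) = (\<integral>w. g (Zc X' \<phi>1 w, Zc X' \<phi>2 w) \<partial>M)"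
proof -
  interpret prob_space M by (rule M)
  have m1: "\<phi>1 \<in> borel_measurable borel" and m2: "\<phi>2 \<in> borel_measurable borel" using i1 i2 by auto
  have ig: "integrable M (\<lambda>w. g (Zc Y \<phi>1 w, Zc Y \<phi>2 w))"
    if Ym: "(\<lambda>(w,t). Y w t) \<in> borel_measurable (M \<Otimes>\<^sub>M lborel)" for Y
    by (rule integrable_const_bound[where B=G]) (use gb g_Z_meas[OF Ym m1 m2 g] in auto)
  have gr: "continuous_on UNIV (\<lambda>z. Re (g z))" and gi: "continuous_on UNIV (\<lambda>z. Im (g z))"
    using g by (auto intro: continuous_intros)
  have br: "\<bar>Re (g z)\<bar> \<le> G" and bi: "\<bar>Im (g z)\<bar> \<le> G" for z
    using abs_Re_le_cmod[of "g z"] abs_Im_le_cmod[of "g z"] gb[of z] by auto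
  have eR: "(\<integral>w. Re (g (Zc X \<phi>1 w, Zc X \<phi>2 w)) \<partial>M) = (\<integral>w. Re (g (Zc X' \<phi>1 w, Zc X' \<phi>2 w)) \<partial>M)"
    by (rule bounded_eq[OF M Xm X'm law i1 i2 r1 r2 r1' r2' gr br])
  have eI: "(\<integral>w. Im (g (Zc X \<phi>1 w, Zc X \<phi>2 w)) \<partial>M) = (\<integral>w. Im (g (Zc X' \<phi>1 w, Zc X' \<phi>2 w)) \<partial>M)"
    by (rule bounded_eq[OF M Xm X'm law i1 i2 r1 r2 r1' r2' gi bi])
  show ?thesis
    using eR eI integral_Re[OF ig[OF Xm]] integral_Re[OF ig[OF X'm]] integral_Im[OF ig[OF Xm]] integral_Im[OF ig[OF X'm]]
    by (simp add: complex_eq_iff)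
qed

definition cutoff :: "nat \<Rightarrow> complex \<times> complex \<Rightarrow> real" where
  "cutoff n z = max 0 (min 1 (real n - norm z))"

lemma cutoff_cont: "continuous_on UNIV (cutoff n)"
  unfolding cutoff_def[abs_def] by (intro continuous_intros)

lemma cutoff_01: "0 \<le> cutoff n z" "cutoff n z \<le> 1"
  unfolding cutoff_def by auto

lemma cutoff_lim: "(\<lambda>n. cutoff n z) \<longlonglongrightarrow> 1"
proof (rule tendsto_eventually)
  show "\<forall>\<^sub>F n in sequentially. cutoff n z = 1"
  proof (rule eventually_sequentiallyI[of "nat \<lceil>norm z + 1\<rceil>"])
    fix n assume "nat \<lceil>norm z + 1\<rceil> \<le> n"
    then have "norm z + 1 \<le> real n" by linarith
    then show "cutoff n z = 1" unfolding cutoff_def by auto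
  qed
qed

lemma quad_eq:
  fixes g :: "complex \<times> complex \<Rightarrow> complex"
  assumes M: "prob_space M"
    and Xm: "(\<lambda>(w,t). X w t) \<in> borel_measurable (M \<Otimes>\<^sub>M lborel)"
    and X'm: "(\<lambda>(w,t). X' w t) \<in> borel_measurable (M \<Otimes>\<^sub>M lborel)"
    and law: "process_law M X = process_law M X'"
    and i1: "integrable lborel \<phi>1" and i2: "integrable lborel \<phi>2"
    and r1: "\<And>w. w \<in> space M \<Longrightarrow> integrable lborel (\<lambda>u. complex_of_real (X w u) * \<phi>1 u)"
    and r2: "\<And>w. w \<in> space M \<Longrightarrow> integrable lborel (\<lambda>u. complex_of_real (X w u) * \<phi>2 u)"
    and r1': "\<And>w. w \<in> space M \<Longrightarrow> integrable lborel (\<lambda>u. complex_of_real (X' w u) * \<phi>1 u)"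
    and r2': "\<And>w. w \<in> space M \<Longrightarrow> integrable lborel (\<lambda>u. complex_of_real (X' w u) * \<phi>2 u)"
    and s1: "integrable M (\<lambda>w. (norm (Zc X \<phi>1 w))\<^sup>2)" and s2: "integrable M (\<lambda>w. (norm (Zc X \<phi>2 w))\<^sup>2)"
    and s1': "integrable M (\<lambda>w. (norm (Zc X' \<phi>1 w))\<^sup>2)" and s2': "integrable M (\<lambda>w. (norm (Zc X' \<phi>2 w))\<^sup>2)"
    and g: "continuous_on UNIV g" and gb: "\<And>a b. norm (g (a, b)) \<le> (norm a)\<^sup>2 + (norm b)\<^sup>2"
  shows "(\<integral>w. g (Zc X \<phi>1 w, Zc X \<phi>2 w) \<partial>M) = (\<integral>w. g (Zc X' \<phi>1 w, Zc X' \<phi>2 w) \<partial>M)"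
proof -
  interpret prob_space M by (rule M)
  have m1: "\<phi>1 \<in> borel_measurable borel" and m2: "\<phi>2 \<in> borel_measurable borel" using i1 i2 by auto
  define gn where "gn n z = complex_of_real (cutoff n z) * g z" for n z
  have gnc: "continuous_on UNIV (gn n)" for n
    unfolding gn_def[abs_def] using cutoff_cont[of n] g by (intro continuous_intros) auto
  have gnb: "norm (gn n z) \<le> 2 * (real n)\<^sup>2" for n z
  proof (cases "norm z < real n")
    case True
    obtain a b where z: "z = (a, b)" by (cases z)
    have "norm a \<le> norm z" "norm b \<le> norm z" unfolding z by (auto simp: norm_Pair intro: real_sqrt_ge_abs1 real_sqrt_ge_abs2)
    then have "norm a \<le> real n" "norm b \<le> real n" using True by auto
    then have p1: "(norm a)\<^sup>2 \<le> (real n)\<^sup>2" and p2: "(norm b)\<^sup>2 \<le> (real n)\<^sup>2" by (auto intro: power_mono)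
    have "norm (g (a, b)) \<le> 2 * (real n)\<^sup>2" using gb[of a b] p1 p2 by linarith
    then have "norm (g z) \<le> 2 * (real n)\<^sup>2" using z by simp
    moreover have "norm (gn n z) \<le> norm (g z)"
      unfolding gn_def norm_mult using cutoff_01[of n z] by (simp add: mult_left_le_one_le)
    ultimately show ?thesis by simp
  next
    case False
    then have "cutoff n z = 0" unfolding cutoff_def by auto
    then show ?thesis unfolding gn_def by simp
  qed
  have eqn: "(\<integral>w. gn n (Zc X \<phi>1 w, Zc X \<phi>2 w) \<partial>M) = (\<integral>w. gn n (Zc X' \<phi>1 w, Zc X' \<phi>2 w) \<partial>M)" for n
    by (rule bounded_eq_complex[OF M Xm X'm law i1 i2 r1 r2 r1' r2' gnc gnb])
  have lim: "(\<lambda>n. \<integral>w. gn n (Zc Y \<phi>1 w, Zc Y \<phi>2 w) \<partial>M) \<longlonglongrightarrow> (\<integral>w. g (Zc Y \<phi>1 w, Zc Y \<phi>2 w) \<partial>M)"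
    if Ym: "(\<lambda>(w,t). Y w t) \<in> borel_measurable (M \<Otimes>\<^sub>M lborel)"
      and t1: "integrable M (\<lambda>w. (norm (Zc Y \<phi>1 w))\<^sup>2)" and t2: "integrable M (\<lambda>w. (norm (Zc Y \<phi>2 w))\<^sup>2)" for Y
  proof (rule integral_dominated_convergence[where w="\<lambda>w. (norm (Zc Y \<phi>1 w))\<^sup>2 + (norm (Zc Y \<phi>2 w))\<^sup>2"])
    show "(\<lambda>w. g (Zc Y \<phi>1 w, Zc Y \<phi>2 w)) \<in> borel_measurable M" by (rule g_Z_meas[OF Ym m1 m2 g])
    show "(\<lambda>w. gn n (Zc Y \<phi>1 w, Zc Y \<phi>2 w)) \<in> borel_measurable M" for n by (rule g_Z_meas[OF Ym m1 m2 gnc])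
    show "integrable M (\<lambda>w. (norm (Zc Y \<phi>1 w))\<^sup>2 + (norm (Zc Y \<phi>2 w))\<^sup>2)" using t1 t2 by (rule Bochner_Integration.integrable_add)
    show "AE w in M. (\<lambda>n. gn n (Zc Y \<phi>1 w, Zc Y \<phi>2 w)) \<longlonglongrightarrow> g (Zc Y \<phi>1 w, Zc Y \<phi>2 w)"
    proof (rule AE_I2)
      fix w
      have "(\<lambda>n. complex_of_real (cutoff n (Zc Y \<phi>1 w, Zc Y \<phi>2 w)) * g (Zc Y \<phi>1 w, Zc Y \<phi>2 w)) \<longlonglongrightarrow> complex_of_real 1 * g (Zc Y \<phi>1 w, Zc Y \<phi>2 w)"
        by (intro tendsto_mult tendsto_of_real cutoff_lim tendsto_const)
      then show "(\<lambda>n. gn n (Zc Y \<phi>1 w, Zc Y \<phi>2 w)) \<longlonglongrightarrow> g (Zc Y \<phi>1 w, Zc Y \<phi>2 w)" unfolding gn_def by simp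
    qed
    show "AE w in M. norm (gn n (Zc Y \<phi>1 w, Zc Y \<phi>2 w)) \<le> (norm (Zc Y \<phi>1 w))\<^sup>2 + (norm (Zc Y \<phi>2 w))\<^sup>2" for n
    proof (rule AE_I2)
      fix w
      have "norm (gn n (Zc Y \<phi>1 w, Zc Y \<phi>2 w)) \<le> norm (g (Zc Y \<phi>1 w, Zc Y \<phi>2 w))"
        unfolding gn_def norm_mult using cutoff_01[of n] by (simp add: mult_left_le_one_le)
      also have "\<dots> \<le> (norm (Zc Y \<phi>1 w))\<^sup>2 + (norm (Zc Y \<phi>2 w))\<^sup>2" by (rule gb)
      finally show "norm (gn n (Zc Y \<phi>1 w, Zc Y \<phi>2 w)) \<le> (norm (Zc Y \<phi>1 w))\<^sup>2 + (norm (Zc Y \<phi>2 w))\<^sup>2" .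
    qed
  qed
  from lim[OF Xm s1 s2] have "(\<lambda>n. \<integral>w. gn n (Zc X' \<phi>1 w, Zc X' \<phi>2 w) \<partial>M) \<longlonglongrightarrow> (\<integral>w. g (Zc X \<phi>1 w, Zc X \<phi>2 w) \<partial>M)"
    unfolding eqn .
  from LIMSEQ_unique[OF this lim[OF X'm s1' s2']] show ?thesis .
qed

lemma AE_affine:
  fixes c t :: real
  assumes c: "c \<noteq> 0" and P: "{x \<in> space borel. P x} \<in> sets borel" and ae: "AE x in lborel. P x"
  shows "AE v in lborel. P (t + c * v)"
proof -
  have eq: "lborel = density (distr lborel borel (\<lambda>x. t + c * x)) (\<lambda>_. ennreal (abs c))"
    by (rule lborel_real_affine[OF c])
  have "AE x in density (distr lborel borel (\<lambda>x. t + c * x)) (\<lambda>_. ennreal (abs c)). P x"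
    unfolding eq[symmetric] by (rule ae)
  then have "AE x in distr lborel borel (\<lambda>x. t + c * x). P x"
    using c by (subst (asm) AE_density) auto
  then show ?thesis
    by (subst (asm) AE_distr_iff) (use P in auto)
qed

lemma psi_j_affine: "psi_j psi j (T - u) = complex_of_real (2 powr (- real_of_int j)) * psi (2 powr (- real_of_int j) * T + (- (2 powr (- real_of_int j))) * u)"
  unfolding psi_j_def by (simp add: algebra_simps)

lemma psi_j_integrable:
  assumes "is_wavelet psi"
  shows "integrable lborel (\<lambda>u. psi_j psi j (T - u))"
proof -
  have ip: "integrable lborel psi" using assms unfolding is_wavelet_def by auto
  have "integrable lborel (\<lambda>u. psi (2 powr (- real_of_int j) * T + (- (2 powr (- real_of_int j))) * u))"
    by (rule lborel_integrable_real_affine[OF ip]) simp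
  then show ?thesis unfolding psi_j_affine by (rule integrable_mult_right)
qed

lemma psi_j_integral:
  assumes "is_wavelet psi"
  shows "(\<integral>u. psi_j psi j (T - u) \<partial>lborel) = 0"
proof -
  have z: "(\<integral>t. psi t \<partial>lborel) = 0" using assms unfolding is_wavelet_def by auto
  have "(\<integral>t. psi t \<partial>lborel) = \<bar>- (2 powr (- real_of_int j))\<bar> *\<^sub>R (\<integral>u. psi (2 powr (- real_of_int j) * T + (- (2 powr (- real_of_int j))) * u) \<partial>lborel)"
    by (rule lborel_integral_real_affine) simp
  then have "(\<integral>u. psi (2 powr (- real_of_int j) * T + (- (2 powr (- real_of_int j))) * u) \<partial>lborel) = 0"
    using z by simp
  then show ?thesis unfolding psi_j_affine by simp
qed

lemma psi_j_sym:
  assumes w: "is_wavelet psi"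
  shows "AE v in lborel. psi_j psi j (T + v) = cnj (psi_j psi j (- T - v))"
proof -
  have [measurable]: "psi \<in> borel_measurable borel" using w unfolding is_wavelet_def by auto
  have P: "{x \<in> space borel. psi (- x) = cnj (psi x)} \<in> sets borel" by measurable
  have "AE v in lborel. psi (- (- (2 powr (- real_of_int j)) * T + (- (2 powr (- real_of_int j))) * v))
     = cnj (psi (- (2 powr (- real_of_int j)) * T + (- (2 powr (- real_of_int j))) * v))"
    by (rule AE_affine[OF _ P wavelet_sym[OF w]]) simp
  then show ?thesis
  proof eventually_elim
    case (elim v)
    define c where "c = 2 powr (- real_of_int j)"
    have e2: "- c * T + - c * v = c * (- T - v)" by (simp add: algebra_simps)
    have e1: "- (c * (- T - v)) = c * (T + v)" by (simp add: algebra_simps)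
    from elim have "psi (c * (T + v)) = cnj (psi (c * (- T - v)))" unfolding c_def[symmetric] e2 e1 .
    then show ?case unfolding psi_j_def c_def[symmetric] by simp
  qed
qed

lemma rev_meas:
  fixes X :: "'a \<Rightarrow> real \<Rightarrow> real"
  assumes Xm: "(\<lambda>(w,t). X w t) \<in> borel_measurable (M \<Otimes>\<^sub>M lborel)"
  shows "(\<lambda>(w,t). X w (- t)) \<in> borel_measurable (M \<Otimes>\<^sub>M lborel)"
proof -
  have m: "(\<lambda>x. (fst x, - snd x)) \<in> (M \<Otimes>\<^sub>M lborel) \<rightarrow>\<^sub>M (M \<Otimes>\<^sub>M lborel)"
    by (intro measurable_Pair measurable_fst measurable_compose[OF measurable_snd]) simp
  have "(\<lambda>x. (\<lambda>(w,t). X w t) (fst x, - snd x)) \<in> borel_measurable (M \<Otimes>\<^sub>M lborel)"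
    by (rule measurable_compose[OF m Xm])
  then show ?thesis by (simp add: case_prod_beta')
qed

lemma shift_meas:
  fixes X :: "'a \<Rightarrow> real \<Rightarrow> real"
  assumes Xm: "(\<lambda>(w,t). X w t) \<in> borel_measurable (M \<Otimes>\<^sub>M lborel)"
  shows "(\<lambda>(w,t). X w (t + h) - X w h) \<in> borel_measurable (M \<Otimes>\<^sub>M lborel)"
proof -
  have m: "(\<lambda>x. (fst x, snd x + h)) \<in> (M \<Otimes>\<^sub>M lborel) \<rightarrow>\<^sub>M (M \<Otimes>\<^sub>M lborel)"
    by (intro measurable_Pair measurable_fst measurable_compose[OF measurable_snd]) simp
  have a: "(\<lambda>x. X (fst x) (snd x + h)) \<in> borel_measurable (M \<Otimes>\<^sub>M lborel)"
    using measurable_compose[OF m Xm] by simp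
  have "(\<lambda>w. X w h) \<in> borel_measurable M" by (rule proc_meas_t[OF Xm])
  then have b: "(\<lambda>x. X (fst x) h) \<in> borel_measurable (M \<Otimes>\<^sub>M lborel)" by (rule jm_fst)
  from borel_measurable_diff[OF a b] show ?thesis by (simp add: case_prod_beta')
qed

lemma row_meas:
  assumes Xm: "(\<lambda>(w,t). X w t) \<in> borel_measurable (M \<Otimes>\<^sub>M lborel)" and w: "w \<in> space M"
  shows "(\<lambda>u. X w u) \<in> borel_measurable borel"
  using measurable_Pair2[OF Xm w] by simp

lemma WX_Zc: "WX X psi w t j = Zc X (\<lambda>u. psi_j psi j (t - u)) w"
  unfolding WX_def Zc_def ..

lemma rev_Zc:
  fixes X :: "'a \<Rightarrow> real \<Rightarrow> real"
  assumes wv: "is_wavelet psi"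
    and Xm: "(\<lambda>(w,t). X w t) \<in> borel_measurable (M \<Otimes>\<^sub>M lborel)" and w: "w \<in> space M"
    and r: "integrable lborel (\<lambda>v. complex_of_real (X w v) * psi_j psi j (- T - v))"
  shows "integrable lborel (\<lambda>u. complex_of_real (X w (- u)) * psi_j psi j (T - u))"
    and "Zc (\<lambda>w t. X w (- t)) (\<lambda>u. psi_j psi j (T - u)) w = cnj (WX X psi w (- T) j)"
proof -
  have pm[measurable]: "psi \<in> borel_measurable borel" using wv unfolding is_wavelet_def by auto
  have xm[measurable]: "(\<lambda>u. X w u) \<in> borel_measurable borel" by (rule row_meas[OF Xm w])
  define f where "f v = complex_of_real (X w v) * psi_j psi j (T + v)" for v
  have fm: "f \<in> borel_measurable lborel" unfolding f_def psi_j_def by measurable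
  have gm: "(\<lambda>v. cnj (complex_of_real (X w v) * psi_j psi j (- T - v))) \<in> borel_measurable lborel"
    unfolding psi_j_def by measurable
  have ae: "AE v in lborel. f v = cnj (complex_of_real (X w v) * psi_j psi j (- T - v))"
    using psi_j_sym[OF wv, of j T] by eventually_elim (simp add: f_def)
  have fi: "integrable lborel f"
    using integrable_cong_AE[OF fm gm ae] integrable_cnj[OF r] by blast
  have ref: "(\<lambda>u. complex_of_real (X w (- u)) * psi_j psi j (T - u)) = (\<lambda>u. f (0 + (-1) * u))"
    unfolding f_def by simp
  show "integrable lborel (\<lambda>u. complex_of_real (X w (- u)) * psi_j psi j (T - u))"
    unfolding ref by (rule lborel_integrable_real_affine[OF fi]) simp
  have "(\<integral>v. f v \<partial>lborel) = \<bar>-1\<bar> *\<^sub>R (\<integral>u. f (0 + (-1) * u) \<partial>lborel)"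
    by (rule lborel_integral_real_affine) simp
  then have "Zc (\<lambda>w t. X w (- t)) (\<lambda>u. psi_j psi j (T - u)) w = (\<integral>v. f v \<partial>lborel)"
    unfolding Zc_def ref by simp
  also have "\<dots> = (\<integral>v. cnj (complex_of_real (X w v) * psi_j psi j (- T - v)) \<partial>lborel)"
    by (rule integral_cong_AE[OF fm gm ae])
  also have "\<dots> = cnj (WX X psi w (- T) j)"
    unfolding WX_def by (subst Bochner_Integration.integral_cnj) simp
  finally show "Zc (\<lambda>w t. X w (- t)) (\<lambda>u. psi_j psi j (T - u)) w = cnj (WX X psi w (- T) j)" .
qed

lemma shift_Zc:
  fixes X :: "'a \<Rightarrow> real \<Rightarrow> real"
  assumes wv: "is_wavelet psi"
    and r: "integrable lborel (\<lambda>v. complex_of_real (X w v) * psi_j psi j (T + h - v))"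
  shows "integrable lborel (\<lambda>u. complex_of_real (X w (u + h) - X w h) * psi_j psi j (T - u))"
    and "Zc (\<lambda>w t. X w (t + h) - X w h) (\<lambda>u. psi_j psi j (T - u)) w = WX X psi w (T + h) j"
proof -
  define F where "F v = complex_of_real (X w v) * psi_j psi j (T + h - v)" for v
  have e: "(\<lambda>u. complex_of_real (X w (u + h)) * psi_j psi j (T - u)) = (\<lambda>u. F (h + 1 * u))"
    unfolding F_def by (simp add: add.commute)
  have i1: "integrable lborel (\<lambda>u. complex_of_real (X w (u + h)) * psi_j psi j (T - u))"
    unfolding e by (rule lborel_integrable_real_affine) (use r F_def in auto)
  have i2: "integrable lborel (\<lambda>u. complex_of_real (X w h) * psi_j psi j (T - u))"
    by (rule integrable_mult_right[OF psi_j_integrable[OF wv]])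
  have split: "complex_of_real (X w (u + h) - X w h) * psi_j psi j (T - u)
      = complex_of_real (X w (u + h)) * psi_j psi j (T - u) - complex_of_real (X w h) * psi_j psi j (T - u)" for u
    by (simp add: algebra_simps)
  show "integrable lborel (\<lambda>u. complex_of_real (X w (u + h) - X w h) * psi_j psi j (T - u))"
    unfolding split using i1 i2 by (rule Bochner_Integration.integrable_diff)
  have "(\<integral>v. F v \<partial>lborel) = \<bar>1\<bar> *\<^sub>R (\<integral>u. F (h + 1 * u) \<partial>lborel)"
    by (rule lborel_integral_real_affine) simp
  then have a: "(\<integral>u. complex_of_real (X w (u + h)) * psi_j psi j (T - u) \<partial>lborel) = WX X psi w (T + h) j"
    unfolding e WX_def F_def by simp
  have b: "(\<integral>u. complex_of_real (X w h) * psi_j psi j (T - u) \<partial>lborel) = 0"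
    using psi_j_integral[OF wv] by simp
  show "Zc (\<lambda>w t. X w (t + h) - X w h) (\<lambda>u. psi_j psi j (T - u)) w = WX X psi w (T + h) j"
    unfolding Zc_def split Bochner_Integration.integral_diff[OF i1 i2] a b by simp
qed

lemma rho_cont: "continuous_on UNIV (rho k)"
  unfolding rho_def[abs_def] by (cases "k = 1") (auto intro!: continuous_intros)

lemma norm_rho: "norm (rho k z) = norm z"
  unfolding rho_def by auto

lemma rho_cnj: "rho k (cnj z) = cnj (rho k z)"
  unfolding rho_def by auto

lemma quad_bound: "norm (x * y) \<le> (norm x)\<^sup>2 + (norm (y::complex))\<^sup>2"
proof -
  have "2 * (norm x * norm y) \<le> (norm x)\<^sup>2 + (norm y)\<^sup>2"
    using sum_squares_bound[of "norm x" "norm y"] by simp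
  moreover have "norm x * norm y \<ge> 0" by simp
  moreover have "norm (x * y) = norm x * norm y" by (simp add: norm_mult)
  ultimately show ?thesis by linarith
qed

theorem proposition2:
  fixes M :: "'a measure" and X :: "'a \<Rightarrow> real \<Rightarrow> real" and psi :: "real \<Rightarrow> complex"
  assumes "prob_space M"
    and "(\<lambda>(w, t). X w t) \<in> borel_measurable (M \<Otimes>\<^sub>M lborel)"
    and "stationary_increments M X"
    and "is_wavelet psi"
    and "\<And>w j t. w \<in> space M \<Longrightarrow> integrable lborel (\<lambda>u. complex_of_real (X w u) * psi_j psi j (t - u))"
    and "\<And>t j. integrable M (\<lambda>w. (cmod (WX X psi w t j))\<^sup>2)"
    and "time_reversible M X"
    and "k \<in> {1, 2}" and "l \<in> {1, 2}"
  shows "(\<integral>w. rho k (WX X psi w t j) * cnj (rho l (WX X psi w (t - 2 powr real_of_int j * \<tau>) (j - a))) \<partial>M)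
       = (\<integral>w. cnj (rho k (WX X psi w t j)) * rho l (WX X psi w (t + 2 powr real_of_int j * \<tau>) (j - a)) \<partial>M)"
proof -
  note M = assms(1) and Xm = assms(2) and wv = assms(4) and r5 = assms(5) and s6 = assms(6)
  define s where "s = 2 powr real_of_int j * \<tau>"
  define j1 where "j1 = j - a"
  define g1 where "g1 z = rho k (fst z) * cnj (rho l (snd z))" for z :: "complex \<times> complex"
  define g2 where "g2 z = cnj (rho k (fst z)) * rho l (snd z)" for z :: "complex \<times> complex"
  have rk: "continuous_on UNIV (\<lambda>z::complex \<times> complex. rho k (fst z))"
    by (rule continuous_on_compose2[OF rho_cont]) (auto intro: continuous_intros)
  have rl: "continuous_on UNIV (\<lambda>z::complex \<times> complex. rho l (snd z))"
    by (rule continuous_on_compose2[OF rho_cont]) (auto intro: continuous_intros)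
  have g1c: "continuous_on UNIV g1" unfolding g1_def[abs_def] using rk rl by (intro continuous_intros)
  have g2c: "continuous_on UNIV g2" unfolding g2_def[abs_def] using rk rl by (intro continuous_intros)
  have g1b: "norm (g1 (x, y)) \<le> (norm x)\<^sup>2 + (norm y)\<^sup>2" for x y
    using quad_bound[of "rho k x" "cnj (rho l y)"] unfolding g1_def by (simp add: norm_rho)
  have g2b: "norm (g2 (x, y)) \<le> (norm x)\<^sup>2 + (norm y)\<^sup>2" for x y
    using quad_bound[of "cnj (rho k x)" "rho l y"] unfolding g2_def by (simp add: norm_rho)
  have gg: "g1 (cnj x, cnj y) = g2 (x, y)" for x y unfolding g1_def g2_def by (simp add: rho_cnj)
  have iP: "integrable lborel (\<lambda>u. psi_j psi jj (T - u))" for jj T by (rule psi_j_integrable[OF wv])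
  have RXm: "(\<lambda>(w,t). X w (- t)) \<in> borel_measurable (M \<Otimes>\<^sub>M lborel)" by (rule rev_meas[OF Xm])
  have lawR: "process_law M X = process_law M (\<lambda>w t. X w (- t))"
    using assms(7) unfolding time_reversible_def by simp
  have ZR: "Zc (\<lambda>w t. X w (- t)) (\<lambda>u. psi_j psi jj (T - u)) w = cnj (WX X psi w (- T) jj)"
    if "w \<in> space M" for w jj T
    by (rule rev_Zc(2)[OF wv Xm that r5[OF that, of jj "- T"]])
  have ZY: "Zc (\<lambda>w t. X w (t + h) - X w h) (\<lambda>u. psi_j psi jj (T - u)) w = WX X psi w (T + h) jj"
    if "w \<in> space M" for w h jj T
    by (rule shift_Zc(2)[where X=X and w=w and psi=psi and j=jj and T=T and h=h, OF wv r5[OF that, of jj "T + h"]])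
  have sqR: "integrable M (\<lambda>w. (norm (Zc (\<lambda>w t. X w (- t)) (\<lambda>u. psi_j psi jj (T - u)) w))\<^sup>2)" for jj T
  proof -
    have "integrable M (\<lambda>w. (cmod (WX X psi w (- T) jj))\<^sup>2)" by (rule s6)
    moreover have "(norm (Zc (\<lambda>w t. X w (- t)) (\<lambda>u. psi_j psi jj (T - u)) w))\<^sup>2 = (cmod (WX X psi w (- T) jj))\<^sup>2"
      if "w \<in> space M" for w
      using ZR[OF that] by simp
    ultimately show ?thesis by (subst Bochner_Integration.integrable_cong[OF refl]) auto
  qed
  have sqX: "integrable M (\<lambda>w. (norm (Zc X (\<lambda>u. psi_j psi jj (T - u)) w))\<^sup>2)" for jj T
    using s6[of T jj] unfolding WX_Zc by simp
  have step1: "(\<integral>w. g1 (WX X psi w t j, WX X psi w (t - s) j1) \<partial>M)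
      = (\<integral>w. g2 (WX X psi w (- t) j, WX X psi w (- (t - s)) j1) \<partial>M)"
  proof -
    have "(\<integral>w. g1 (Zc X (\<lambda>u. psi_j psi j (t - u)) w, Zc X (\<lambda>u. psi_j psi j1 ((t - s) - u)) w) \<partial>M)
      = (\<integral>w. g1 (Zc (\<lambda>w t. X w (- t)) (\<lambda>u. psi_j psi j (t - u)) w, Zc (\<lambda>w t. X w (- t)) (\<lambda>u. psi_j psi j1 ((t - s) - u)) w) \<partial>M)"
    proof (rule quad_eq[OF M Xm RXm lawR iP iP _ _ _ _ sqX sqX sqR sqR g1c g1b])
      show "integrable lborel (\<lambda>u. complex_of_real (X w u) * psi_j psi j (t - u))" if "w \<in> space M" for w
        by (rule r5[OF that])
      show "integrable lborel (\<lambda>u. complex_of_real (X w u) * psi_j psi j1 ((t - s) - u))" if "w \<in> space M" for w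
        by (rule r5[OF that])
      show "integrable lborel (\<lambda>u. complex_of_real (X w (- u)) * psi_j psi j (t - u))" if "w \<in> space M" for w
        by (rule rev_Zc(1)[OF wv Xm that r5[OF that, of j "- t"]])
      show "integrable lborel (\<lambda>u. complex_of_real (X w (- u)) * psi_j psi j1 ((t - s) - u))" if "w \<in> space M" for w
        by (rule rev_Zc(1)[OF wv Xm that r5[OF that, of j1 "- (t - s)"]])
    qed
    also have "\<dots> = (\<integral>w. g1 (cnj (WX X psi w (- t) j), cnj (WX X psi w (- (t - s)) j1)) \<partial>M)"
      by (intro Bochner_Integration.integral_cong refl)
         (simp add: ZR)
    finally show ?thesis unfolding WX_Zc[symmetric] gg .
  qed
  have Ym: "(\<lambda>(w,t). X w (t + h) - X w h) \<in> borel_measurable (M \<Otimes>\<^sub>M lborel)" for h by (rule shift_meas[OF Xm])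
  have lawY: "process_law M (\<lambda>w t. X w (t + 0) - X w 0) = process_law M (\<lambda>w t. X w (t + 2 * t') - X w (2 * t'))" for t'
    using assms(3) unfolding stationary_increments_def by simp
  have sqY: "integrable M (\<lambda>w. (norm (Zc (\<lambda>w t. X w (t + h) - X w h) (\<lambda>u. psi_j psi jj (T - u)) w))\<^sup>2)" for jj T h
  proof -
    have "integrable M (\<lambda>w. (cmod (WX X psi w (T + h) jj))\<^sup>2)" by (rule s6)
    moreover have "(norm (Zc (\<lambda>w t. X w (t + h) - X w h) (\<lambda>u. psi_j psi jj (T - u)) w))\<^sup>2 = (cmod (WX X psi w (T + h) jj))\<^sup>2"
      if "w \<in> space M" for w
      using ZY[OF that] by simp
    ultimately show ?thesis by (subst Bochner_Integration.integrable_cong[OF refl]) auto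
  qed
  have rY: "integrable lborel (\<lambda>u. complex_of_real (X w (u + h) - X w h) * psi_j psi jj (T - u))"
    if "w \<in> space M" for w h jj T
    by (rule shift_Zc(1)[where X=X and w=w and psi=psi and j=jj and T=T and h=h, OF wv r5[OF that, of jj "T + h"]])
  have step2: "(\<integral>w. g2 (WX X psi w (- t + 0) j, WX X psi w (- (t - s) + 0) j1) \<partial>M)
      = (\<integral>w. g2 (WX X psi w (- t + 2 * t) j, WX X psi w (- (t - s) + 2 * t) j1) \<partial>M)"
  proof -
    have "(\<integral>w. g2 (WX X psi w (- t + 0) j, WX X psi w (- (t - s) + 0) j1) \<partial>M)
      = (\<integral>w. g2 (Zc (\<lambda>w t. X w (t + 0) - X w 0) (\<lambda>u. psi_j psi j (- t - u)) w,
                     Zc (\<lambda>w t. X w (t + 0) - X w 0) (\<lambda>u. psi_j psi j1 (- (t - s) - u)) w) \<partial>M)"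
      by (intro Bochner_Integration.integral_cong refl) (simp only: ZY)
    also have "\<dots> = (\<integral>w. g2 (Zc (\<lambda>w t'. X w (t' + 2 * t) - X w (2 * t)) (\<lambda>u. psi_j psi j (- t - u)) w,
                     Zc (\<lambda>w t'. X w (t' + 2 * t) - X w (2 * t)) (\<lambda>u. psi_j psi j1 (- (t - s) - u)) w) \<partial>M)"
      by (rule quad_eq[OF M Ym Ym lawY iP iP rY rY rY rY sqY sqY sqY sqY g2c g2b])
    also have "\<dots> = (\<integral>w. g2 (WX X psi w (- t + 2 * t) j, WX X psi w (- (t - s) + 2 * t) j1) \<partial>M)"
      by (intro Bochner_Integration.integral_cong refl) (simp only: ZY)
    finally show ?thesis .
  qed
  have e1: "- t + 2 * t = t" "- (t - s) + 2 * t = t + s" "- t + 0 = - t" "- (t - s) + 0 = - (t - s)" by simp_all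
  have "(\<integral>w. g1 (WX X psi w t j, WX X psi w (t - s) j1) \<partial>M) = (\<integral>w. g2 (WX X psi w t j, WX X psi w (t + s) j1) \<partial>M)"
    using step1 step2 unfolding e1 by simp
  then show ?thesis unfolding g1_def g2_def s_def j1_def by simp
qed

end
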